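(* Let $\ell,n\in\mathbb{Z}_{\ge0}$ with $\ell\ge n$ and let $1\le k<n$. There is a family of skew polynomials $\{g_{\underline e,k+1}\in\mathrm{SkPol}_{k+1}\mid \underline e=(e_k,\dots,e_1)\in\{0,1\}^k\}$ such that (1) each $g_{\underline e,k+1}$ is a polynomial in $t_{k+1}$ of degree $\ell-k+\ell(\underline e)$ whose leading coefficient is invertible and whose other coefficients lie in $\mathrm{SkPol}_k$; and (2) $\sum_{\underline e}g_{\underline e,k+1}\,\tau_{\underline{S_k}^{\underline e}}=0$ in $\mathrm{ONH}_n^\ell$ (where $g_{\underline e,k+1}$ acts by substituting $x_j$ for $t_j$).
   Context: $\mathbf{k}$ is a field of characteristic $\neq2$. $\mathrm{ONH}_n$ is the unital $\mathbf{k}$-algebra with generators $\tau_1,\dots,\tau_{n-1},x_1,\dots,x_n$ and relations $\tau_i^2=0$; $\tau_i\tau_{i+1}\tau_i=\tau_{i+1}\tau_i\tau_{i+1}$; $x_i\tau_i+\tau_ix_{i+1}=1$; $\tau_ix_i+x_{i+1}\tau_i=1$; $x_ix_j+x_jx_i=0$ ($i\ne j$); $\tau_i\tau_j+\tau_j\tau_i=0$ ($|i-j|>1$); $x_i\tau_j+\tau_jx_i=0$ ($i\ne j,j+1$). $\mathrm{ONH}_n^\ell$ is its quotient by the two-sided ideal generated by $x_1^\ell$. $\mathrm{SkPol}_a=\mathbb{Z}\langle t_1,\dots,t_a\rangle/(t_it_j+t_jt_i,\ i\ne j)$, with $\mathrm{SkPol}_a\subset\mathrm{SkPol}_{a+1}$;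 it acts on $\mathrm{ONH}_n^\ell$ by multiplication after substituting $x_j$ for $t_j$. For $\underline e=(e_k,\dots,e_1)\in\{0,1\}^k$, $\ell(\underline e)=\sum_ie_i$ and $\tau_{\underline{S_k}^{\underline e}}=\tau_{s_k^{e_k}}\tau_{s_{k-1}^{e_{k-1}}}\cdots\tau_{s_1^{e_1}}$, where $\tau_{s_j^1}=\tau_j$ and $\tau_{s_j^0}=1$. *)

theory Defs
  imports Main
begin

text \<open>Free (noncommutative) algebra over a coefficient ring 'r on an alphabet 'a:
  an element is a coefficient function on words. Elements of interest have
  finite support; the product is the concatenation (Cauchy) product.\<close>

type_synonym ('a, 'r) fa = "'a list \<Rightarrow> 'r"

definition fa_zero :: "('a, 'r::zero) fa" where
  "fa_zero = (\<lambda>_. 0)"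

definition fa_word :: "'a list \<Rightarrow> ('a, 'r::{zero,one}) fa" where
  "fa_word u = (\<lambda>w. if w = u then 1 else 0)"

definition fa_one :: "('a, 'r::{zero,one}) fa" where
  "fa_one = fa_word []"

definition fa_add :: "('a, 'r::plus) fa \<Rightarrow> ('a, 'r) fa \<Rightarrow> ('a, 'r) fa" where
  "fa_add p q = (\<lambda>w. p w + q w)"

definition fa_diff :: "('a, 'r::minus) fa \<Rightarrow> ('a, 'r) fa \<Rightarrow> ('a, 'r) fa" where
  "fa_diff p q = (\<lambda>w. p w - q w)"

definition fa_smul :: "'r::times \<Rightarrow> ('a, 'r) fa \<Rightarrow> ('a, 'r) fa" where
  "fa_smul c p = (\<lambda>w. c * p w)"

definition fa_mul :: "('a, 'r::comm_semiring_0) fa \<Rightarrow> ('a, 'r) fa \<Rightarrow> ('a, 'r) fa" where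
  "fa_mul p q = (\<lambda>w. \<Sum>i\<le>length w. p (take i w) * q (drop i w))"

definition fa_sum :: "'i set \<Rightarrow> ('i \<Rightarrow> ('a, 'r::comm_monoid_add) fa) \<Rightarrow> ('a, 'r) fa" where
  "fa_sum A f = (\<lambda>w. \<Sum>i\<in>A. f i w)"

definition fa_pow :: "('a, 'r::comm_semiring_1) fa \<Rightarrow> nat \<Rightarrow> ('a, 'r) fa" where
  "fa_pow p m = ((fa_mul p) ^^ m) fa_one"

definition fa_over :: "'a set \<Rightarrow> ('a, 'r::zero) fa \<Rightarrow> bool" where
  "fa_over S p \<longleftrightarrow> finite {w. p w \<noteq> 0} \<and> (\<forall>w. p w \<noteq> 0 \<longrightarrow> set w \<subseteq> S)"

inductive_set fa_ideal :: "('a, 'r::comm_ring_1) fa set \<Rightarrow> ('a, 'r) fa set"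
  for R :: "('a, 'r) fa set" where
  zero: "fa_zero \<in> fa_ideal R"
| add: "p \<in> fa_ideal R \<Longrightarrow> q \<in> fa_ideal R \<Longrightarrow> fa_add p q \<in> fa_ideal R"
| gen: "r \<in> R \<Longrightarrow> fa_smul c (fa_mul (fa_mul (fa_word u) r) (fa_word v)) \<in> fa_ideal R"

section \<open>The cyclotomic odd nilHecke algebra ONH_n^l\<close>

datatype onh_gen = Tau nat | X nat

definition onh_rels :: "nat \<Rightarrow> nat \<Rightarrow> (onh_gen, 'k::field) fa set" where
  "onh_rels n l =
     {fa_word [Tau i, Tau i] | i. 1 \<le> i \<and> i < n}
   \<union> {fa_diff (fa_word [Tau i, Tau (i+1), Tau i]) (fa_word [Tau (i+1), Tau i, Tau (i+1)])
       | i. 1 \<le> i \<and> i + 1 < n}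
   \<union> {fa_diff (fa_add (fa_word [X i, Tau i]) (fa_word [Tau i, X (i+1)])) fa_one
       | i. 1 \<le> i \<and> i < n}
   \<union> {fa_diff (fa_add (fa_word [Tau i, X i]) (fa_word [X (i+1), Tau i])) fa_one
       | i. 1 \<le> i \<and> i < n}
   \<union> {fa_add (fa_word [X i, X j]) (fa_word [X j, X i])
       | i j. 1 \<le> i \<and> i \<le> n \<and> 1 \<le> j \<and> j \<le> n \<and> i \<noteq> j}
   \<union> {fa_add (fa_word [Tau i, Tau j]) (fa_word [Tau j, Tau i])
       | i j. 1 \<le> i \<and> i < n \<and> 1 \<le> j \<and> j < n \<and> (i + 1 < j \<or> j + 1 < i)}
   \<union> {fa_add (fa_word [X i, Tau j]) (fa_word [Tau j, X i])
       | i j. 1 \<le> i \<and> i \<le> n \<and> 1 \<le> j \<and> j < n \<and> i \<noteq> j \<and> i \<noteq> j + 1}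
   \<union> {fa_word (replicate l (X 1))}"

definition onhl_zero :: "nat \<Rightarrow> nat \<Rightarrow> (onh_gen, 'k::field) fa \<Rightarrow> bool" where
  "onhl_zero n l p \<longleftrightarrow> p \<in> fa_ideal (onh_rels n l)"

section \<open>Skew polynomials over the integers (letter j stands for t_j)\<close>

definition skpol_rels :: "(nat, int) fa set" where
  "skpol_rels = {fa_add (fa_word [i, j]) (fa_word [j, i]) | i j. 1 \<le> i \<and> 1 \<le> j \<and> i \<noteq> j}"

definition skpol_eq :: "(nat, int) fa \<Rightarrow> (nat, int) fa \<Rightarrow> bool" where
  "skpol_eq p q \<longleftrightarrow> fa_diff p q \<in> fa_ideal skpol_rels"

definition skpol :: "nat \<Rightarrow> (nat, int) fa \<Rightarrow> bool" where
  "skpol a p \<longleftrightarrow> fa_over {1..a} p"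

definition subst_x :: "(nat, int) fa \<Rightarrow> (onh_gen, 'k::ring_1) fa" where
  "subst_x p = (\<lambda>w. if (\<exists>v. w = map X v) then of_int (p (THE v. w = map X v)) else 0)"

text \<open>For e = [e_k, ..., e_1] (so e ! p = e_(k-p)), the word
  tau_(s_k^e_k) ... tau_(s_1^e_1).\<close>
definition tau_word :: "nat \<Rightarrow> bool list \<Rightarrow> (onh_gen, 'k::{zero,one}) fa" where
  "tau_word k e = fa_word (concat (map (\<lambda>p. if e ! p then [Tau (k - p)] else []) [0..<k]))"

definition len_e :: "bool list \<Rightarrow> nat" where
  "len_e e = length (filter id e)"

end

theory Submission
  imports Defs "HOL-Library.Function_Algebras"
begin

lemma fa_add_eq: "fa_add p q = p + q" by (simp add: fa_add_def fun_eq_iff)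
lemma fa_diff_eq: "fa_diff p q = p - q" by (simp add: fa_diff_def fun_eq_iff)
lemma lam_zero: "(\<lambda>_. 0) = (0 :: 'a \<Rightarrow> 'b::zero)" by (simp add: zero_fun_def)
lemma fa_zero_eq: "fa_zero = 0" by (simp add: fa_zero_def fun_eq_iff)

lemma sum_fun_apply: "(\<Sum>i\<in>A. f i) w = (\<Sum>i\<in>A. f i w)"
  by (induction A rule: infinite_finite_induct) auto

lemma fa_sum_eq: "fa_sum A f = sum f A"
  by (simp add: fa_sum_def fun_eq_iff sum_fun_apply)

definition shL :: "'a list \<Rightarrow> ('a,'r::zero) fa \<Rightarrow> ('a,'r) fa" where
  "shL u p = (\<lambda>w. if take (length u) w = u then p (drop (length u) w) else 0)"

definition shR :: "'a list \<Rightarrow> ('a,'r::zero) fa \<Rightarrow> ('a,'r) fa" where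
  "shR v p = (\<lambda>w. if length v \<le> length w \<and> drop (length w - length v) w = v
                    then p (take (length w - length v) w) else 0)"

lemma mul_word_left: "fa_mul (fa_word u) p = shL u (p :: ('a,'r::comm_semiring_1) fa)"
proof (rule ext)
  fix w :: "'a list"
  have "fa_mul (fa_word u) p w = (\<Sum>i\<le>length w. if i = length u \<and> take (length u) w = u then p (drop i w) else 0)"
    unfolding fa_mul_def fa_word_def
  proof (rule sum.cong)
    fix i assume "i \<in> {..length w}"
    then have "take i w = u \<longleftrightarrow> i = length u \<and> take (length u) w = u" by auto
    then show "(if take i w = u then 1 else 0) * p (drop i w) = (if i = length u \<and> take (length u) w = u then p (drop i w) else 0)"
      by simp
  qed simp
  also have "\<dots> = shL u p w"
    by (auto simp: shL_def sum.delta' dest: arg_cong[of _ _ length])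
  finally show "fa_mul (fa_word u) p w = shL u p w" .
qed

lemma mul_word_right: "fa_mul p (fa_word v) = shR v (p :: ('a,'r::comm_semiring_1) fa)"
proof (rule ext)
  fix w :: "'a list"
  have "fa_mul p (fa_word v) w = (\<Sum>i\<le>length w. if i = length w - length v \<and> length v \<le> length w \<and> drop (length w - length v) w = v then p (take i w) else 0)"
    unfolding fa_mul_def fa_word_def
  proof (rule sum.cong)
    fix i assume "i \<in> {..length w}"
    then have "drop i w = v \<longleftrightarrow> i = length w - length v \<and> length v \<le> length w \<and> drop (length w - length v) w = v" by auto
    then show "p (take i w) * (if drop i w = v then 1 else 0) = (if i = length w - length v \<and> length v \<le> length w \<and> drop (length w - length v) w = v then p (take i w) else 0)"
      by simp
  qed simp
  also have "\<dots> = shR v p w"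
    by (auto simp: shR_def sum.delta')
  finally show "fa_mul p (fa_word v) w = shR v p w" .
qed

lemma shL_word: "shL u (fa_word w) = fa_word (u @ w)"
  by (auto simp: shL_def fa_word_def fun_eq_iff) (metis append_take_drop_id)

lemma shR_word: "shR v (fa_word w) = fa_word (w @ v)"
  by (auto simp: shR_def fa_word_def fun_eq_iff) (metis append_take_drop_id)

lemma shL_add: "shL u (p + q) = shL u p + shL u (q::('a,'r::monoid_add) fa)"
  by (auto simp: shL_def fun_eq_iff)
lemma shR_add: "shR u (p + q) = shR u p + shR u (q::('a,'r::monoid_add) fa)"
  by (auto simp: shR_def fun_eq_iff)
lemma shL_diff: "shL u (p - q) = shL u p - shL u (q::('a,'r::group_add) fa)"
  by (auto simp: shL_def fun_eq_iff)
lemma shR_diff: "shR u (p - q) = shR u p - shR u (q::('a,'r::group_add) fa)"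
  by (auto simp: shR_def fun_eq_iff)
lemma shL_smul: "shL u (fa_smul c p) = fa_smul c (shL u (p::('a,'r::mult_zero) fa))"
  by (auto simp: shL_def fa_smul_def fun_eq_iff)
lemma shR_smul: "shR u (fa_smul c p) = fa_smul c (shR u (p::('a,'r::mult_zero) fa))"
  by (auto simp: shR_def fa_smul_def fun_eq_iff)
lemma shL_zero[simp]: "shL u 0 = 0" by (auto simp: shL_def fun_eq_iff)
lemma shR_zero[simp]: "shR u 0 = 0" by (auto simp: shR_def fun_eq_iff)
lemma shR_sum: "shR u (sum f A) = (\<Sum>i\<in>A. shR u (f i :: ('a,'r::comm_monoid_add) fa))"
proof (induction A rule: infinite_finite_induct)
  case (insert x F)
  have "sum f (insert x F) = f x + sum f F" using insert(1,2) by (rule sum.insert)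
  moreover have "(\<Sum>i\<in>insert x F. shR u (f i)) = shR u (f x) + (\<Sum>i\<in>F. shR u (f i))" using insert(1,2) by (rule sum.insert)
  ultimately show ?case using insert(3) by (simp only: shR_add)
next
  case (infinite A)
  then show ?case by (metis sum.infinite shR_zero)
qed (simp_all only: sum.empty shR_zero)

lemma shL_app[simp]: "shL u p (u @ a) = p a"
  by (simp add: shL_def)
lemma shL_napp: "\<not> (\<exists>a. w = u @ a) \<Longrightarrow> shL u p w = 0"
  by (auto simp: shL_def) (metis append_take_drop_id)
lemma shR_app[simp]: "shR v p (a @ v) = p a"
  by (simp add: shR_def)
lemma shR_napp: "\<not> (\<exists>a. w = a @ v) \<Longrightarrow> shR v p w = 0"
  by (auto simp: shR_def) (metis append_take_drop_id)

lemma shL_shL: "shL u (shL u' p) = shL (u @ u') p"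
proof (rule ext)
  fix w show "shL u (shL u' p) w = shL (u @ u') p w"
  proof (cases "\<exists>a. w = u @ u' @ a")
    case True
    then obtain a where w: "w = u @ u' @ a" by blast
    have "shL (u @ u') p w = p a" using shL_app[of "u @ u'" p a] by (simp add: w)
    then show ?thesis by (simp add: w)
  next
    case False
    have r: "shL (u @ u') p w = 0" using False by (intro shL_napp) simp
    show ?thesis
    proof (cases "\<exists>b. w = u @ b")
      case True
      then obtain b where w: "w = u @ b" by blast
      have "shL u' p b = 0" using False w by (intro shL_napp) auto
      then show ?thesis using r w by simp
    next
      case False
      then show ?thesis using r by (simp add: shL_napp)
    qed
  qed
qed

lemma shR_shR: "shR v (shR v' p) = shR (v' @ v) p"
proof (rule ext)
  fix w show "shR v (shR v' p) w = shR (v' @ v) p w"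
  proof (cases "\<exists>a. w = a @ v' @ v")
    case True
    then obtain a where w: "w = a @ v' @ v" by blast
    have "shR (v' @ v) p w = p a" using shR_app[of "v' @ v" p a] by (simp add: w)
    moreover have "shR v (shR v' p) w = p a" using shR_app[of v "shR v' p" "a @ v'"] by (simp add: w)
    ultimately show ?thesis by simp
  next
    case False
    have r: "shR (v' @ v) p w = 0" using False by (intro shR_napp) simp
    show ?thesis
    proof (cases "\<exists>b. w = b @ v")
      case True
      then obtain b where w: "w = b @ v" by blast
      have "shR v' p b = 0" using False w by (intro shR_napp) auto
      then show ?thesis using r w by simp
    next
      case False
      then show ?thesis using r by (simp add: shR_napp)
    qed
  qed
qed

lemma shL_shR: "shL u (shR v p) = shR v (shL u p)"
proof (rule ext)
  fix w show "shL u (shR v p) w = shR v (shL u p) w"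
  proof (cases "\<exists>a. w = u @ a @ v")
    case True
    then obtain a where w: "w = u @ a @ v" by blast
    have "shL u (shR v p) w = p a" by (simp add: w)
    moreover have "shR v (shL u p) w = p a" using shR_app[of v "shL u p" "u @ a"] by (simp add: w)
    ultimately show ?thesis by simp
  next
    case False
    show ?thesis
    proof (cases "\<exists>b. w = u @ b")
      case True
      then obtain b where w: "w = u @ b" by blast
      have "shR v p b = 0" using False w by (intro shR_napp) auto
      moreover have "shR v (shL u p) w = 0"
      proof (cases "\<exists>c. w = c @ v")
        case True
        then obtain c where c: "w = c @ v" by blast
        have "shL u p c = 0" using False c by (intro shL_napp) auto
        then show ?thesis using c by simp
      qed (simp add: shR_napp)
      ultimately show ?thesis using w by simp
    next
      case False
      then have "shR v (shL u p) w = 0"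
        by (cases "\<exists>c. w = c @ v") (auto simp: shR_napp intro!: shL_napp)
      then show ?thesis using False by (simp add: shL_napp)
    qed
  qed
qed

lemma shL_sum: "shL u (sum f A) = (\<Sum>i\<in>A. shL u (f i :: ('a,'r::comm_monoid_add) fa))"
proof (induction A rule: infinite_finite_induct)
  case (insert x F)
  have "sum f (insert x F) = f x + sum f F" using insert(1,2) by (rule sum.insert)
  moreover have "(\<Sum>i\<in>insert x F. shL u (f i)) = shL u (f x) + (\<Sum>i\<in>F. shL u (f i))" using insert(1,2) by (rule sum.insert)
  ultimately show ?case using insert(3) by (simp only: shL_add)
next
  case (infinite A)
  then show ?case by (metis sum.infinite shL_zero)
qed (simp_all only: sum.empty shL_zero)

lemma word_mul_word: "fa_mul (fa_word a) (fa_word b :: ('a,'r::comm_semiring_1) fa) = fa_word (a @ b)"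
  by (simp add: mul_word_left shL_word)

lemma smul_smul: "fa_smul a (fa_smul b p) = fa_smul (a * b) (p :: ('a,'r::semigroup_mult) fa)"
  by (simp add: fa_smul_def mult.assoc)

lemma smul_add: "fa_smul c (p + q) = fa_smul c p + fa_smul c (q :: ('a,'r::semiring) fa)"
  by (simp add: fa_smul_def fun_eq_iff distrib_left)

lemma smul_diff: "fa_smul c (p - q) = fa_smul c p - fa_smul c (q :: ('a,'r::ring) fa)"
  by (simp add: fa_smul_def fun_eq_iff right_diff_distrib)

lemma smul_zero[simp]: "fa_smul c 0 = (0 :: ('a,'r::mult_zero) fa)"
  by (simp add: fa_smul_def fun_eq_iff)

lemma smul_one_left[simp]: "fa_smul 1 p = (p :: ('a,'r::monoid_mult) fa)"
  by (simp add: fa_smul_def)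

lemma smul_neg1: "fa_smul (-1) p = - (p :: ('a,'r::ring_1) fa)"
  by (simp add: fa_smul_def fun_eq_iff)

lemma smul_sum: "fa_smul c (sum f A) = (\<Sum>i\<in>A. fa_smul c (f i :: ('a,'r::comm_semiring_0) fa))"
  by (simp add: fa_smul_def fun_eq_iff sum_fun_apply sum_distrib_left)

lemma I_zero: "0 \<in> fa_ideal R"
  using fa_ideal.zero[of R] by (simp add: fa_zero_eq)

lemma I_add: "p \<in> fa_ideal R \<Longrightarrow> q \<in> fa_ideal R \<Longrightarrow> p + q \<in> fa_ideal R"
  using fa_ideal.add[of p R q] by (simp add: fa_add_eq)

lemma I_smul: "p \<in> fa_ideal R \<Longrightarrow> fa_smul c p \<in> fa_ideal R"
proof (induction p rule: fa_ideal.induct)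
  case zero
  then show ?case using fa_ideal.zero[of R] by (simp add: fa_zero_eq lam_zero)
next
  case (add p q)
  then show ?case by (simp only: fa_add_eq smul_add) (rule I_add)
next
  case (gen r c' u v)
  then show ?case by (simp add: smul_smul fa_ideal.gen)
qed

lemma I_neg: assumes "p \<in> fa_ideal R" shows "- p \<in> fa_ideal R"
proof -
  have "fa_smul (-1) p \<in> fa_ideal R" using assms by (rule I_smul)
  then show ?thesis by (simp only: smul_neg1)
qed

lemma I_diff: assumes "p \<in> fa_ideal R" "q \<in> fa_ideal R" shows "p - q \<in> fa_ideal R"
proof -
  have "p + - q \<in> fa_ideal R" using assms by (intro I_add I_neg)
  then show ?thesis by (simp only: diff_conv_add_uminus)
qed

lemma I_sum: "(\<And>i. i \<in> A \<Longrightarrow> f i \<in> fa_ideal R) \<Longrightarrow> sum f A \<in> fa_ideal R"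
proof (induction A rule: infinite_finite_induct)
  case (infinite A)
  then show ?case using I_zero by (metis sum.infinite)
next
  case empty
  then show ?case using I_zero by (metis sum.empty)
next
  case (insert x F)
  then have "f x + sum f F \<in> fa_ideal R" by (intro I_add) auto
  moreover have "sum f (insert x F) = f x + sum f F" using insert(1,2) by (rule sum.insert)
  ultimately show ?case by metis
qed

lemma I_gen: "r \<in> R \<Longrightarrow> shR v (shL u r) \<in> fa_ideal R"
  using fa_ideal.gen[of r R 1 u v] by (simp add: mul_word_left mul_word_right)

lemma I_shL: "p \<in> fa_ideal R \<Longrightarrow> shL u p \<in> fa_ideal R"
proof (induction p rule: fa_ideal.induct)
  case zero
  then show ?case using fa_ideal.zero[of R] by (simp add: fa_zero_eq lam_zero)
next
  case (add p q)
  then show ?case by (simp only: fa_add_eq shL_add) (rule I_add)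
next
  case (gen r c u' v)
  then show ?case
    by (simp add: mul_word_left mul_word_right shL_smul shL_shR shL_shL I_smul I_gen)
qed

lemma I_shR: "p \<in> fa_ideal R \<Longrightarrow> shR u p \<in> fa_ideal R"
proof (induction p rule: fa_ideal.induct)
  case zero
  then show ?case using fa_ideal.zero[of R] by (simp add: fa_zero_eq lam_zero)
next
  case (add p q)
  then show ?case by (simp only: fa_add_eq shR_add) (rule I_add)
next
  case (gen r c u' v)
  then show ?case
    by (simp add: mul_word_left mul_word_right shR_smul shR_shR I_smul I_gen)
qed

lemma mul_sum_left: "fa_mul (sum f A) p = (\<Sum>i\<in>A. fa_mul (f i) (p :: ('a,'r::comm_semiring_0) fa))"
  by (simp add: fa_mul_def fun_eq_iff sum_fun_apply sum_distrib_right) (intro allI sum.swap)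

lemma mul_sum_right: "fa_mul p (sum f A) = (\<Sum>i\<in>A. fa_mul p (f i :: ('a,'r::comm_semiring_0) fa))"
  by (simp add: fa_mul_def fun_eq_iff sum_fun_apply sum_distrib_left) (intro allI sum.swap)

lemma mul_smul_left: "fa_mul (fa_smul c q) p = fa_smul c (fa_mul q (p :: ('a,'r::comm_semiring_0) fa))"
  by (simp add: fa_mul_def fa_smul_def fun_eq_iff sum_distrib_left mult.assoc)

lemma mul_smul_right: "fa_mul q (fa_smul c p) = fa_smul c (fa_mul q (p :: ('a,'r::comm_semiring_0) fa))"
  by (simp add: fa_mul_def fa_smul_def fun_eq_iff sum_distrib_left mult.left_commute)

lemma mul_add_right: "fa_mul q (p1 + p2) = fa_mul q p1 + fa_mul q (p2 :: ('a,'r::comm_semiring_0) fa)"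
  by (simp add: fa_mul_def fun_eq_iff distrib_left sum.distrib)

lemma mul_diff_right: "fa_mul q (p1 - p2) = fa_mul q p1 - fa_mul q (p2 :: ('a,'r::comm_ring) fa)"
  by (simp add: fa_mul_def fun_eq_iff right_diff_distrib sum_subtractf)

lemma mul_zero_right[simp]: "fa_mul q 0 = (0 :: ('a,'r::comm_semiring_0) fa)"
  by (simp add: fa_mul_def fun_eq_iff)

lemma mul_zero_left[simp]: "fa_mul 0 q = (0 :: ('a,'r::comm_semiring_0) fa)"
  by (simp add: fa_mul_def fun_eq_iff)

definition supp :: "('a,'r::zero) fa \<Rightarrow> 'a list set" where
  "supp p = {w. p w \<noteq> 0}"

lemma fa_decomp: "finite (supp q) \<Longrightarrow> q = (\<Sum>w\<in>supp q. fa_smul (q w) (fa_word w :: ('a,'r::comm_semiring_1) fa))"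
  by (auto simp: fun_eq_iff sum_fun_apply fa_smul_def fa_word_def supp_def if_distrib sum.delta sum.delta' cong: if_cong)

lemma I_mulL: "finite (supp q) \<Longrightarrow> p \<in> fa_ideal R \<Longrightarrow> fa_mul q p \<in> fa_ideal R"
  apply (subst fa_decomp, assumption)
  by (auto simp: mul_sum_left mul_smul_left mul_word_left intro!: I_sum I_smul I_shL)

definition cg :: "('a,'r::comm_ring_1) fa set \<Rightarrow> ('a,'r) fa \<Rightarrow> ('a,'r) fa \<Rightarrow> bool" where
  "cg R p q \<longleftrightarrow> p - q \<in> fa_ideal R"

lemma cg_eq: assumes "p = q" shows "cg R p q"
proof -
  have "p - q = 0" using assms by simp
  then show ?thesis unfolding cg_def using I_zero by (simp only:)
qed

lemma cg_refl: "cg R p p" by (rule cg_eq) (rule refl)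

lemma cg_sym: assumes "cg R p q" shows "cg R q p"
proof -
  have "- (p - q) \<in> fa_ideal R" using assms unfolding cg_def by (rule I_neg)
  then show ?thesis unfolding cg_def by (simp only: minus_diff_eq)
qed

lemma cg_trans: assumes "cg R p q" "cg R q r" shows "cg R p r"
proof -
  have "(p - q) + (q - r) \<in> fa_ideal R" using assms unfolding cg_def by (rule I_add)
  moreover have "(p - q) + (q - r) = p - r" by (simp add: algebra_simps)
  ultimately show ?thesis unfolding cg_def by (simp only:)
qed

lemma cg_add: assumes a: "cg R p p'" "cg R q q'" shows "cg R (p + q) (p' + q')"
proof -
  have "(p - p') + (q - q') \<in> fa_ideal R" using a unfolding cg_def by (rule I_add)
  moreover have "(p - p') + (q - q') = (p + q) - (p' + q')" by (simp add: algebra_simps)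
  ultimately show ?thesis unfolding cg_def by (simp only:)
qed

lemma cg_diff: assumes a: "cg R p p'" "cg R q q'" shows "cg R (p - q) (p' - q')"
proof -
  have "(p - p') - (q - q') \<in> fa_ideal R" using a unfolding cg_def by (rule I_diff)
  moreover have "(p - p') - (q - q') = (p - q) - (p' - q')" by (simp add: algebra_simps)
  ultimately show ?thesis unfolding cg_def by (simp only:)
qed

lemma cg_neg: assumes "cg R p p'" shows "cg R (- p) (- p')"
proof -
  have "- (p - p') \<in> fa_ideal R" using assms unfolding cg_def by (rule I_neg)
  moreover have "- (p - p') = (- p) - (- p')" by (simp add: algebra_simps)
  ultimately show ?thesis unfolding cg_def by (simp only:)
qed

lemma cg_smul: assumes "cg R p q" shows "cg R (fa_smul c p) (fa_smul c q)"
proof -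
  have "fa_smul c (p - q) \<in> fa_ideal R" using assms unfolding cg_def by (rule I_smul)
  then show ?thesis unfolding cg_def by (simp only: smul_diff)
qed

lemma cg_sum: assumes a: "\<And>i. i \<in> A \<Longrightarrow> cg R (f i) (g i)" shows "cg R (sum f A) (sum g A)"
proof -
  have "sum (\<lambda>i. f i - g i) A \<in> fa_ideal R" using a unfolding cg_def by (rule I_sum)
  then show ?thesis unfolding cg_def by (simp only: sum_subtractf)
qed

lemma cg_shR: assumes "cg R p q" shows "cg R (shR v p) (shR v q)"
proof -
  have "shR v (p - q) \<in> fa_ideal R" using assms unfolding cg_def by (rule I_shR)
  then show ?thesis unfolding cg_def by (simp only: shR_diff)
qed

lemma cg_mulL: assumes "finite (supp a)" "cg R p q" shows "cg R (fa_mul a p) (fa_mul a q)"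
proof -
  have "fa_mul a (p - q) \<in> fa_ideal R" using assms unfolding cg_def by (rule I_mulL)
  then show ?thesis unfolding cg_def by (simp only: mul_diff_right)
qed

lemma cg_zeroI: "cg R p 0 \<Longrightarrow> p \<in> fa_ideal R"
  unfolding cg_def by (simp only: diff_zero)

lemma cg_I: "p \<in> fa_ideal R \<Longrightarrow> cg R p 0"
  unfolding cg_def by (simp only: diff_zero)

lemma cg_gen: "r \<in> R \<Longrightarrow> cg R (shR v (shL u r)) 0"
  by (rule cg_I) (rule I_gen)

lemma cg_subst: "cg R p q \<Longrightarrow> p = p' \<Longrightarrow> q = q' \<Longrightarrow> cg R p' q'"
  by simp


lemma cg_plus0_neg: assumes "cg R (a + b) 0" shows "cg R b (- a)"
proof -
  have "b - (- a) = (a + b) - 0" by (simp add: algebra_simps)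
  then show ?thesis using assms unfolding cg_def by (simp only:)
qed

lemma cg_tx0: assumes "cg R (a + b - c) 0" shows "cg R a (c - b)"
proof -
  have "a - (c - b) = (a + b - c) - 0" by (simp add: algebra_simps)
  then show ?thesis using assms unfolding cg_def by (simp only:)
qed

lemma rel_anti: "1 \<le> i \<Longrightarrow> i \<le> n \<Longrightarrow> 1 \<le> j \<Longrightarrow> j < n \<Longrightarrow> i \<noteq> j \<Longrightarrow> i \<noteq> j + 1 \<Longrightarrow>
  fa_add (fa_word [X i, Tau j]) (fa_word [Tau j, X i]) \<in> (onh_rels n l :: (onh_gen,'k::field) fa set)"
  unfolding onh_rels_def by blast

lemma rel_xx: "1 \<le> i \<Longrightarrow> i \<le> n \<Longrightarrow> 1 \<le> j \<Longrightarrow> j \<le> n \<Longrightarrow> i \<noteq> j \<Longrightarrow>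
  fa_add (fa_word [X i, X j]) (fa_word [X j, X i]) \<in> (onh_rels n l :: (onh_gen,'k::field) fa set)"
  unfolding onh_rels_def by blast

lemma rel_tx: "1 \<le> i \<Longrightarrow> i < n \<Longrightarrow>
  fa_diff (fa_add (fa_word [Tau i, X i]) (fa_word [X (i+1), Tau i])) fa_one \<in> (onh_rels n l :: (onh_gen,'k::field) fa set)"
  unfolding onh_rels_def by blast

lemma rel_cyc: "fa_word (replicate l (X 1)) \<in> (onh_rels n l :: (onh_gen,'k::field) fa set)"
  unfolding onh_rels_def by blast

lemma R_anti:
  assumes "1 \<le> i" "i \<le> n" "1 \<le> j" "j < n" "i \<noteq> j" "i \<noteq> j + 1"
  shows "cg (onh_rels n l) (fa_word (u @ Tau j # X i # v) :: (onh_gen,'k::field) fa) (- fa_word (u @ X i # Tau j # v))"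
proof -
  have "cg (onh_rels n l) (shR v (shL u (fa_add (fa_word [X i, Tau j]) (fa_word [Tau j, X i]))) :: (onh_gen,'k) fa) 0"
    by (rule cg_gen) (rule rel_anti[OF assms])
  moreover have "shR v (shL u (fa_add (fa_word [X i, Tau j]) (fa_word [Tau j, X i]))) =
     (fa_word (u @ X i # Tau j # v) + fa_word (u @ Tau j # X i # v) :: (onh_gen,'k) fa)"
    by (simp add: fa_add_eq shL_add shR_add shL_word shR_word)
  ultimately show ?thesis by (intro cg_plus0_neg) (simp only:)
qed

lemma R_xx:
  assumes "1 \<le> i" "i \<le> n" "1 \<le> j" "j \<le> n" "i \<noteq> j"
  shows "cg (onh_rels n l) (fa_word (u @ X j # X i # v) :: (onh_gen,'k::field) fa) (- fa_word (u @ X i # X j # v))"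
proof -
  have "cg (onh_rels n l) (shR v (shL u (fa_add (fa_word [X i, X j]) (fa_word [X j, X i]))) :: (onh_gen,'k) fa) 0"
    by (rule cg_gen) (rule rel_xx[OF assms])
  moreover have "shR v (shL u (fa_add (fa_word [X i, X j]) (fa_word [X j, X i]))) =
     (fa_word (u @ X i # X j # v) + fa_word (u @ X j # X i # v) :: (onh_gen,'k) fa)"
    by (simp add: fa_add_eq shL_add shR_add shL_word shR_word)
  ultimately show ?thesis by (intro cg_plus0_neg) (simp only:)
qed

lemma R_tx:
  assumes "1 \<le> i" "i < n"
  shows "cg (onh_rels n l) (fa_word (u @ Tau i # X i # v) :: (onh_gen,'k::field) fa)
           (fa_word (u @ v) - fa_word (u @ X (Suc i) # Tau i # v))"
proof -
  have "cg (onh_rels n l) (shR v (shL u (fa_diff (fa_add (fa_word [Tau i, X i]) (fa_word [X (i+1), Tau i])) fa_one)) :: (onh_gen,'k) fa) 0"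
    by (rule cg_gen) (rule rel_tx[OF assms])
  moreover have "shR v (shL u (fa_diff (fa_add (fa_word [Tau i, X i]) (fa_word [X (i+1), Tau i])) fa_one)) =
     (fa_word (u @ Tau i # X i # v) + fa_word (u @ X (Suc i) # Tau i # v) - fa_word (u @ v) :: (onh_gen,'k) fa)"
    by (simp add: fa_add_eq fa_diff_eq fa_one_def shL_add shR_add shL_diff shR_diff shL_word shR_word)
  ultimately show ?thesis by (intro cg_tx0) (simp only:)
qed

lemma smul_neg_scalar: "fa_smul (- c) p = - fa_smul c (p :: ('a,'r::comm_ring_1) fa)"
  by (simp add: fa_smul_def fun_eq_iff)
lemma smul_neg_arg: "fa_smul c (- p) = - fa_smul c (p :: ('a,'r::comm_ring_1) fa)"
  by (simp add: fa_smul_def fun_eq_iff)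

lemma smul_rearr: "fa_smul c (a - b) + s = fa_smul (- c) b + (fa_smul c a + s :: ('x,'r::comm_ring_1) fa)"
  by (simp add: smul_diff smul_neg_scalar algebra_simps)

fun tw :: "nat \<Rightarrow> nat set \<Rightarrow> onh_gen list" where
  "tw 0 S = []"
| "tw (Suc k) S = (if Suc k \<in> S then [Tau (Suc k)] else []) @ tw k S"

lemma tw_cong: "(\<And>i. 1 \<le> i \<Longrightarrow> i \<le> k \<Longrightarrow> i \<in> S \<longleftrightarrow> i \<in> S') \<Longrightarrow> tw k S = tw k S'"
  by (induction k) auto

definition mS :: "nat set \<Rightarrow> nat" where "mS S = (LEAST i. 0 < i \<and> i \<notin> S)"

lemma mS_eqI: assumes "0 < a" "a \<notin> S" "\<And>i. 0 < i \<Longrightarrow> i < a \<Longrightarrow> i \<in> S" shows "mS S = a"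
  unfolding mS_def
proof (rule Least_equality)
  show "0 < a \<and> a \<notin> S" using assms by simp
  fix y assume "0 < y \<and> y \<notin> S"
  then show "a \<le> y" using assms(3) by (meson not_less)
qed

lemma mS_props:
  assumes "S \<subseteq> {1..k}"
  shows "0 < mS S" "mS S \<notin> S" "\<And>i. 0 < i \<Longrightarrow> i < mS S \<Longrightarrow> i \<in> S" "mS S \<le> Suc k"
proof -
  have ex: "0 < Suc k \<and> Suc k \<notin> S" using assms by auto
  show "0 < mS S" "mS S \<notin> S" unfolding mS_def using LeastI[of "\<lambda>i. 0 < i \<and> i \<notin> S", OF ex] by auto
  show "mS S \<le> Suc k" unfolding mS_def using Least_le[of "\<lambda>i. 0 < i \<and> i \<notin> S", OF ex] .
  fix i assume "0 < i" "i < mS S"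
  then show "i \<in> S" unfolding mS_def using not_less_Least by blast
qed

lemma L1:
  assumes "S \<subseteq> {1..k}" "k < n"
  shows "cg (onh_rels n l) (fa_word (u @ tw k S @ X 1 # v) :: (onh_gen,'k::field) fa)
     (fa_smul ((-1)^card S) (fa_word (u @ X (mS S) # tw k S @ v)) +
      (\<Sum>j\<in>{1..<mS S}. fa_smul ((-1)^(j-1)) (fa_word (u @ tw k (S - {j}) @ v))))"
  using assms
proof (induction k arbitrary: S u)
  case 0
  then have S: "S = {}" by auto
  then have "mS S = 1" by (intro mS_eqI) auto
  then show ?case using S by (simp add: cg_refl)
next
  case (Suc k)
  define S' where "S' = S - {Suc k}"
  have S': "S' \<subseteq> {1..k}" using Suc.prems by (auto simp: S'_def)
  have twS: "tw k S = tw k S'" by (rule tw_cong) (auto simp: S'_def)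
  have twSj: "tw k (S - {j}) = tw k (S' - {j})" for j by (rule tw_cong) (auto simp: S'_def)
  have kn: "k < n" using Suc.prems by simp
  show ?case
  proof (cases "Suc k \<in> S")
    case False
    then have SS: "S' = S" by (auto simp: S'_def)
    have tw1: "tw (Suc k) S = tw k S" using False by simp
    have tw2: "tw (Suc k) (S - {j}) = tw k (S - {j})" for j using False by simp
    have S1: "S \<subseteq> {1..k}" using S' SS by simp
    show ?thesis unfolding tw1 tw2 by (rule Suc.IH[OF S1 kn])
  next
    case True
    let ?T = "Tau (Suc k)"
    let ?R = "onh_rels n l :: (onh_gen,'k) fa set"
    have IH: "cg ?R (fa_word ((u @ [?T]) @ tw k S' @ X 1 # v))
       (fa_smul ((-1)^card S') (fa_word ((u @ [?T]) @ X (mS S') # tw k S' @ v)) +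
        (\<Sum>j\<in>{1..<mS S'}. fa_smul ((-1)^(j-1)) (fa_word ((u @ [?T]) @ tw k (S' - {j}) @ v))))"
      by (rule Suc.IH[OF S' kn])
    have lhs: "u @ tw (Suc k) S @ X 1 # v = (u @ [?T]) @ tw k S' @ X 1 # v" using True twS by simp
    have finS': "finite S'" using S' finite_subset by blast
    have SS: "S = insert (Suc k) S'" using True by (auto simp: S'_def)
    have nS': "Suc k \<notin> S'" by (simp add: S'_def)
    have cardS: "card S = Suc (card S')" unfolding SS using finS' nS' by (rule card_insert_disjoint)
    have mS'le: "mS S' \<le> Suc k" by (rule mS_props(4)[OF S'])
    show ?thesis
    proof (cases "mS S' \<le> k")
      case True2: True
      define m where "m = mS S'"
      have m0: "0 < m" unfolding m_def by (rule mS_props(1)[OF S'])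
      have mS: "mS S = m"
      proof (rule mS_eqI)
        show "0 < m" by (rule m0)
        show "m \<notin> S" using mS_props(2)[OF S'] True2 unfolding m_def S'_def by auto
        fix i assume "0 < i" "i < m" then show "i \<in> S" using mS_props(3)[OF S'] unfolding m_def S'_def by auto
      qed
      have step: "cg ?R (fa_smul ((-1)^card S') (fa_word (u @ ?T # X m # tw k S' @ v)))
           (fa_smul ((-1)^card S') (- fa_word (u @ X m # ?T # tw k S' @ v)))"
        by (intro cg_smul R_anti) (use m0 True2 Suc.prems(2) in \<open>auto simp: m_def\<close>)
      have sums: "(\<Sum>j\<in>{1..<m}. fa_smul ((-1)^(j-1)) (fa_word ((u @ [?T]) @ tw k (S' - {j}) @ v))) =
          (\<Sum>j\<in>{1..<m}. fa_smul ((-1)^(j-1)) (fa_word (u @ tw (Suc k) (S - {j}) @ v)) :: (onh_gen,'k) fa)"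
      proof (rule sum.cong)
        fix j assume "j \<in> {1..<m}"
        then have "Suc k \<in> S - {j}" using True True2 by (auto simp: m_def)
        then show "fa_smul ((-1)^(j-1)) (fa_word ((u @ [?T]) @ tw k (S' - {j}) @ v)) =
          (fa_smul ((-1)^(j-1)) (fa_word (u @ tw (Suc k) (S - {j}) @ v)) :: (onh_gen,'k) fa)"
          using twSj[of j] by simp
      qed simp
      have last: "fa_smul ((-1)^card S') (- fa_word (u @ X m # ?T # tw k S' @ v)) =
          (fa_smul ((-1)^card S) (fa_word (u @ X (mS S) # tw (Suc k) S @ v)) :: (onh_gen,'k) fa)"
        using True twS by (simp add: mS cardS smul_neg_arg smul_neg_scalar)
      have "cg ?R (fa_word (u @ tw (Suc k) S @ X 1 # v))
         (fa_smul ((-1)^card S') (- fa_word (u @ X m # ?T # tw k S' @ v)) +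
          (\<Sum>j\<in>{1..<m}. fa_smul ((-1)^(j-1)) (fa_word ((u @ [?T]) @ tw k (S' - {j}) @ v))))"
        unfolding lhs
        apply (rule cg_trans[OF IH])
        apply (rule cg_add)
        using step apply (simp add: m_def)
        by (simp add: m_def cg_refl)
      then show ?thesis unfolding sums last mS .
    next
      case False2: False
      then have mk: "mS S' = Suc k" using mS'le by simp
      have S'all: "S' = {1..k}" using mS_props(3)[OF S'] S' unfolding mk by fastforce
      have cardS': "card S' = k" using S'all by simp
      have mS: "mS S = Suc (Suc k)"
      proof (rule mS_eqI)
        show "Suc (Suc k) \<notin> S" using Suc.prems(1) by auto
        fix i assume "0 < i" "i < Suc (Suc k)" then show "i \<in> S" using SS S'all by auto
      qed simp
      have step: "cg ?R (fa_smul ((-1)^k) (fa_word (u @ ?T # X (Suc k) # tw k S' @ v)))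
           (fa_smul ((-1)^k) (fa_word (u @ tw k S' @ v) - fa_word (u @ X (Suc (Suc k)) # ?T # tw k S' @ v)))"
        by (intro cg_smul R_tx) (use Suc.prems(2) in auto)
      have sums: "(\<Sum>j\<in>{1..<Suc k}. fa_smul ((-1)^(j-1)) (fa_word ((u @ [?T]) @ tw k (S' - {j}) @ v))) =
          (\<Sum>j\<in>{1..<Suc k}. fa_smul ((-1)^(j-1)) (fa_word (u @ tw (Suc k) (S - {j}) @ v)) :: (onh_gen,'k) fa)"
      proof (rule sum.cong)
        fix j assume "j \<in> {1..<Suc k}"
        then have "Suc k \<in> S - {j}" using True by auto
        then show "fa_smul ((-1)^(j-1)) (fa_word ((u @ [?T]) @ tw k (S' - {j}) @ v)) =
          (fa_smul ((-1)^(j-1)) (fa_word (u @ tw (Suc k) (S - {j}) @ v)) :: (onh_gen,'k) fa)"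
          using twSj[of j] by simp
      qed simp
      have split: "{1..<Suc (Suc k)} = insert (Suc k) {1..<Suc k}" by auto
      have lastterm: "tw (Suc k) (S - {Suc k}) = tw k S'"
        using twSj[of "Suc k"] by (simp add: S'_def)
      have "cg ?R (fa_word (u @ tw (Suc k) S @ X 1 # v))
         (fa_smul ((-1)^k) (fa_word (u @ tw k S' @ v) - fa_word (u @ X (Suc (Suc k)) # ?T # tw k S' @ v)) +
          (\<Sum>j\<in>{1..<Suc k}. fa_smul ((-1)^(j-1)) (fa_word ((u @ [?T]) @ tw k (S' - {j}) @ v))))"
        unfolding lhs
        apply (rule cg_trans[OF IH])
        apply (rule cg_add)
        using step apply (simp add: mk cardS')
        by (simp add: mk cg_refl)
      moreover
      let ?f = "\<lambda>j. fa_smul ((-1)^(j-1)) (fa_word (u @ tw (Suc k) (S - {j}) @ v)) :: (onh_gen,'k) fa"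
      let ?A = "fa_word (u @ tw k S' @ v) :: (onh_gen,'k) fa"
      let ?B = "fa_word (u @ X (Suc (Suc k)) # ?T # tw k S' @ v) :: (onh_gen,'k) fa"
      have eq1: "fa_word (u @ X (mS S) # tw (Suc k) S @ v) = ?B" using True twS by (simp add: mS)
      have eq2: "sum ?f {1..<mS S} = ?f (Suc k) + sum ?f {1..<Suc k}"
        unfolding mS split by (rule sum.insert) simp_all
      have eq3: "?f (Suc k) = fa_smul ((-1)^k) ?A" by (simp add: S'_def)
      have eq4: "(-1)^card S = - ((-1)^k :: 'k)" by (simp add: cardS cardS')
      have "fa_smul ((-1)^k) (?A - ?B) + sum ?f {1..<Suc k} =
         fa_smul ((-1)^card S) (fa_word (u @ X (mS S) # tw (Suc k) S @ v)) + sum ?f {1..<mS S}"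
        unfolding eq1 eq2 eq3 eq4 by (rule smul_rearr)
      then have "fa_smul ((-1)^k) (?A - ?B) +
          (\<Sum>j\<in>{1..<Suc k}. fa_smul ((-1)^(j-1)) (fa_word ((u @ [?T]) @ tw k (S' - {j}) @ v))) =
         fa_smul ((-1)^card S) (fa_word (u @ X (mS S) # tw (Suc k) S @ v)) +
          (\<Sum>j\<in>{1..<mS S}. fa_smul ((-1)^(j-1)) (fa_word (u @ tw (Suc k) (S - {j}) @ v)))"
        unfolding sums .
      ultimately show ?thesis by (rule cg_subst[OF _ refl])
    qed
  qed
qed


lemma swap_rep:
  assumes "1 \<le> a" "a \<le> n" "1 \<le> b" "b \<le> n" "a \<noteq> b"
  shows "cg (onh_rels n l) (fa_word (u @ replicate j (X a) @ X b # v) :: (onh_gen,'k::field) fa)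
           (fa_smul ((-1)^j) (fa_word (u @ X b # replicate j (X a) @ v)))"
proof (induction j arbitrary: u)
  case 0
  then show ?case by (simp add: cg_refl)
next
  case (Suc j)
  have IH: "cg (onh_rels n l) (fa_word ((u @ [X a]) @ replicate j (X a) @ X b # v) :: (onh_gen,'k) fa)
           (fa_smul ((-1)^j) (fa_word ((u @ [X a]) @ X b # replicate j (X a) @ v)))"
    by (rule Suc.IH)
  then have IH: "cg (onh_rels n l) (fa_word (u @ X a # replicate j (X a) @ X b # v) :: (onh_gen,'k) fa)
           (fa_smul ((-1)^j) (fa_word (u @ X a # X b # replicate j (X a) @ v)))"
    by (simp only: append_assoc append.simps)
  have st: "cg (onh_rels n l) (fa_word (u @ X a # X b # replicate j (X a) @ v) :: (onh_gen,'k) fa)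
      (- fa_word (u @ X b # X a # replicate j (X a) @ v))"
    by (rule R_xx) (use assms in auto)
  have "cg (onh_rels n l) (fa_word (u @ replicate (Suc j) (X a) @ X b # v) :: (onh_gen,'k) fa)
           (fa_smul ((-1)^j) (- fa_word (u @ X b # X a # replicate j (X a) @ v)))"
    using cg_trans[OF IH cg_smul[OF st, of "(-1)^j"]] by simp
  then show ?case
  proof (rule cg_subst[OF _ refl])
    have "(-1::'k)^Suc j = - ((-1)^j)" by simp
    then show "fa_smul ((-1)^j) (- fa_word (u @ X b # X a # replicate j (X a) @ v)) =
       (fa_smul ((-1)^Suc j) (fa_word (u @ X b # replicate (Suc j) (X a) @ v)) :: (onh_gen,'k) fa)"
      by (simp only: smul_neg_arg smul_neg_scalar replicate_Suc append.simps)
  qed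
qed

lemma map_X_inj: "map X a = map X b \<longleftrightarrow> a = b"
proof -
  have "inj X" by (simp add: inj_def)
  then have "inj (map X)" by (rule list.inj_map)
  then show ?thesis by (metis injD)
qed

lemma sum_hom:
  assumes "\<And>p q. h (p + q) = h p + h q" "h 0 = 0"
  shows "h (sum f A) = (\<Sum>i\<in>A. h (f i))"
proof (induction A rule: infinite_finite_induct)
  case (infinite A)
  then show ?case using assms(2) by (metis sum.infinite)
next
  case empty
  then show ?case using assms(2) by (metis sum.empty)
next
  case (insert x F)
  have "sum f (insert x F) = f x + sum f F" using insert(1,2) by (rule sum.insert)
  moreover have "(\<Sum>i\<in>insert x F. h (f i)) = h (f x) + (\<Sum>i\<in>F. h (f i))" using insert(1,2) by (rule sum.insert)
  ultimately show ?case using insert(3) assms(1) by metis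
qed

lemma subst_map: "subst_x p (map X v) = (of_int (p v) :: 'k::ring_1)"
  unfolding subst_x_def by (auto simp: map_X_inj)

lemma subst_nmap: "\<not> (\<exists>v. w = map X v) \<Longrightarrow> subst_x p w = (0 :: 'k::ring_1)"
  unfolding subst_x_def by auto

lemma subst_add: "subst_x (p + q) = (subst_x p + subst_x q :: (onh_gen,'k::ring_1) fa)"
  by (auto simp: subst_x_def fun_eq_iff)

lemma subst_zero[simp]: "subst_x 0 = (0 :: (onh_gen,'k::ring_1) fa)"
  by (auto simp: subst_x_def fun_eq_iff)

lemma subst_smul: "subst_x (fa_smul c p) = (fa_smul (of_int c) (subst_x p) :: (onh_gen,'k::ring_1) fa)"
  by (auto simp: subst_x_def fun_eq_iff fa_smul_def)

lemma subst_sum: "subst_x (sum f A) = (\<Sum>i\<in>A. subst_x (f i) :: (onh_gen,'k::ring_1) fa)"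
  by (rule sum_hom[where h = subst_x]) (simp_all add: subst_add)

lemma subst_word: "subst_x (fa_word v) = (fa_word (map X v) :: (onh_gen,'k::ring_1) fa)"
proof (rule ext)
  fix w show "subst_x (fa_word v) w = (fa_word (map X v) :: (onh_gen,'k) fa) w"
    by (cases "\<exists>u. w = map X u") (auto simp: subst_map subst_nmap fa_word_def map_X_inj)
qed

lemma subst_shR: "subst_x (shR v p) = (shR (map X v) (subst_x p) :: (onh_gen,'k::ring_1) fa)"
proof (rule ext)
  fix w
  show "subst_x (shR v p) w = (shR (map X v) (subst_x p) :: (onh_gen,'k) fa) w"
  proof (cases "\<exists>a. w = map X (a @ v)")
    case True
    then obtain a where w: "w = map X (a @ v)" by blast
    have "shR (map X v) (subst_x p) w = (subst_x p (map X a) :: 'k)" unfolding w by simp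
    then show ?thesis unfolding w subst_map by (simp add: subst_map)
  next
    case False
    have l: "subst_x (shR v p) w = (0::'k)"
    proof (cases "\<exists>u. w = map X u")
      case True
      then obtain u where u: "w = map X u" by blast
      have "\<not> (\<exists>a. u = a @ v)" using False u by auto
      then show ?thesis unfolding u subst_map by (simp add: shR_napp)
    qed (simp add: subst_nmap)
    have r: "shR (map X v) (subst_x p) w = (0::'k)"
    proof (cases "\<exists>b. w = b @ map X v")
      case True
      then obtain b where b: "w = b @ map X v" by blast
      have "\<not> (\<exists>a. b = map X a)" using False b by auto
      then show ?thesis unfolding b by (simp add: subst_nmap)
    qed (simp add: shR_napp)
    show ?thesis using l r by simp
  qed
qed

lemma subst_mul_word: "subst_x (fa_mul p (fa_word v)) = (shR (map X v) (subst_x p) :: (onh_gen,'k::comm_ring_1) fa)"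
  by (simp add: mul_word_right subst_shR)

lemma supp_add: "supp (p + q) \<subseteq> supp p \<union> supp (q :: ('a,'r::monoid_add) fa)"
  by (auto simp: supp_def)

lemma supp_smul: "supp (fa_smul c p) \<subseteq> supp (p :: ('a,'r::mult_zero) fa)"
  by (auto simp: supp_def fa_smul_def)

lemma supp_shR: "supp (shR v p) \<subseteq> (\<lambda>a. a @ v) ` supp (p :: ('a,'r::zero) fa)"
proof
  fix w assume "w \<in> supp (shR v p)"
  then have nz: "shR v p w \<noteq> 0" by (simp add: supp_def)
  then obtain a where w: "w = a @ v" using shR_napp by metis
  then show "w \<in> (\<lambda>a. a @ v) ` supp p" using nz by (auto simp: supp_def)
qed

lemma supp_subst: "supp (subst_x p :: (onh_gen,'k::ring_1) fa) \<subseteq> map X ` supp p"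
proof
  fix w assume "w \<in> supp (subst_x p :: (onh_gen,'k) fa)"
  then have nz: "(subst_x p w :: 'k) \<noteq> 0" by (simp add: supp_def)
  then obtain u where w: "w = map X u" using subst_nmap by metis
  then show "w \<in> map X ` supp p" using nz by (auto simp: supp_def subst_map)
qed

lemma fin_add: "finite (supp p) \<Longrightarrow> finite (supp q) \<Longrightarrow> finite (supp (p + q :: ('a,'r::monoid_add) fa))"
  by (meson finite_UnI finite_subset supp_add)
lemma fin_smul: "finite (supp p) \<Longrightarrow> finite (supp (fa_smul c p :: ('a,'r::mult_zero) fa))"
  by (meson finite_subset supp_smul)
lemma fin_shR: "finite (supp p) \<Longrightarrow> finite (supp (shR v p :: ('a,'r::zero) fa))"
  by (meson finite_imageI finite_subset supp_shR)
lemma fin_subst: "finite (supp p) \<Longrightarrow> finite (supp (subst_x p :: (onh_gen,'k::ring_1) fa))"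
  by (meson finite_imageI finite_subset supp_subst)
lemma fin_zero: "finite (supp (0 :: ('a,'r::zero) fa))"
  by (simp add: supp_def)
lemma fin_sum: "(\<And>i. i \<in> A \<Longrightarrow> finite (supp (f i))) \<Longrightarrow> finite (supp (sum f A :: ('a,'r::comm_monoid_add) fa))"
proof (induction A rule: infinite_finite_induct)
  case (insert x F)
  have "sum f (insert x F) = f x + sum f F" using insert(1,2) by (rule sum.insert)
  then show ?case using insert by (metis fin_add insertCI)
qed (simp_all add: fin_zero)

lemma over_iff: "fa_over A p \<longleftrightarrow> finite (supp p) \<and> (\<forall>w\<in>supp p. set w \<subseteq> A)"
  by (auto simp: fa_over_def supp_def)

lemma over_zero: "fa_over A (0 :: ('a,'r::zero) fa)"
  by (simp add: over_iff supp_def)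

lemma over_word: "set w \<subseteq> A \<Longrightarrow> fa_over A (fa_word w :: ('a,'r::zero_neq_one) fa)"
  by (auto simp: over_iff supp_def fa_word_def)

lemma over_add: "fa_over A p \<Longrightarrow> fa_over A q \<Longrightarrow> fa_over A (p + q :: ('a,'r::monoid_add) fa)"
  unfolding over_iff using fin_add supp_add by blast

lemma over_smul: "fa_over A p \<Longrightarrow> fa_over A (fa_smul c p :: ('a,'r::mult_zero) fa)"
  unfolding over_iff using fin_smul supp_smul by blast

lemma over_shR: "fa_over A p \<Longrightarrow> set v \<subseteq> A \<Longrightarrow> fa_over A (shR v p :: ('a,'r::zero) fa)"
  unfolding over_iff using fin_shR supp_shR by fastforce

lemma over_mono: "fa_over A p \<Longrightarrow> A \<subseteq> B \<Longrightarrow> fa_over B p"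
  unfolding over_iff by blast

lemma over_sum: "(\<And>i. i \<in> I \<Longrightarrow> fa_over A (f i)) \<Longrightarrow> fa_over A (sum f I :: ('a,'r::comm_monoid_add) fa)"
proof (induction I rule: infinite_finite_induct)
  case (insert x F)
  have "sum f (insert x F) = f x + sum f F" using insert(1,2) by (rule sum.insert)
  then show ?case using insert by (metis over_add insertCI)
qed (simp_all add: over_zero)

lemma over_fin: "fa_over A p \<Longrightarrow> finite (supp p)"
  by (simp add: over_iff)


lemma uneta_plus: "(\<lambda>a. p a + q a) = p + q" by (simp add: plus_fun_def)
lemma uneta_minus: "(\<lambda>a. p a - q a) = p - q" by (simp add: fun_diff_def)
lemma uneta_uminus: "(\<lambda>a. - p a) = - (p :: 'a \<Rightarrow> 'b::uminus)" by (simp add: fun_Compl_def)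
lemmas uneta = lam_zero uneta_plus uneta_minus uneta_uminus

fun cc :: "nat \<Rightarrow> nat \<Rightarrow> nat set \<Rightarrow> nat \<Rightarrow> (nat,int) fa" where
  "cc k 0 S j = (if S = {1..k} \<and> j = 0 then fa_word [] else 0)"
| "cc k (Suc r) S j = (if mS S = Suc k then (if j = 0 then 0 else fa_smul ((-1)^k) (cc k r S (j-1)))
     else fa_smul ((-1)^(card S + j)) (fa_mul (cc k r S j) (fa_word [mS S]))
        + fa_smul ((-1)^(mS S - 1)) (cc k r (insert (mS S) S) j))"

lemma cc_0: "cc k 0 S j = (if S = {1..k} \<and> j = 0 then fa_word [] else 0)"
  by (simp add: fun_eq_iff)

lemma cc_Suc: "cc k (Suc r) S j = (if mS S = Suc k then (if j = 0 then 0 else fa_smul ((-1)^k) (cc k r S (j-1)))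
     else fa_smul ((-1)^(card S + j)) (fa_mul (cc k r S j) (fa_word [mS S]))
        + fa_smul ((-1)^(mS S - 1)) (cc k r (insert (mS S) S) j))"
  by (simp add: fun_eq_iff)

declare cc.simps[simp del]

lemma cc_all: assumes h: "mS S = Suc k" shows "cc k (Suc r) S j = (if j = 0 then 0 else fa_smul ((-1)^k) (cc k r S (j-1)))"
  by (simp only: cc_Suc if_P[OF h])

lemma cc_low: assumes h: "mS S \<noteq> Suc k" shows "cc k (Suc r) S j = fa_smul ((-1)^(card S + j)) (fa_mul (cc k r S j) (fa_word [mS S]))
        + fa_smul ((-1)^(mS S - 1)) (cc k r (insert (mS S) S) j)"
  by (simp only: cc_Suc if_not_P[OF h])

lemma mS_all: assumes "S \<subseteq> {1..k}" shows "mS S = Suc k \<longleftrightarrow> S = {1..k}"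
proof
  assume m: "mS S = Suc k"
  show "S = {1..k}"
  proof
    show "{1..k} \<subseteq> S" using mS_props(3)[OF assms] m by auto
  qed (rule assms)
next
  assume "S = {1..k}"
  then show "mS S = Suc k" by (intro mS_eqI) auto
qed

lemma mS_low:
  assumes "S \<subseteq> {1..k}" "mS S \<noteq> Suc k"
  shows "1 \<le> mS S" "mS S \<le> k" "insert (mS S) S \<subseteq> {1..k}" "card (insert (mS S) S) = Suc (card S)"
proof -
  show 1: "1 \<le> mS S" using mS_props(1)[OF assms(1)] by simp
  show 2: "mS S \<le> k" using mS_props(4)[OF assms(1)] assms(2) by simp
  show "insert (mS S) S \<subseteq> {1..k}" using 1 2 assms(1) by auto
  have "finite S" using assms(1) finite_subset by blast
  then show "card (insert (mS S) S) = Suc (card S)" using mS_props(2)[OF assms(1)] by simp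
qed

lemma cc_over: "S \<subseteq> {1..k} \<Longrightarrow> fa_over {1..k} (cc k r S j)"
proof (induction r arbitrary: S j)
  case 0
  then show ?case by (simp add: cc_0 over_word over_zero)
next
  case (Suc r)
  show ?case
  proof (cases "mS S = Suc k")
    case True
    note e = cc_all[OF True, of r j]
    show ?thesis unfolding e using Suc by (simp add: over_zero over_smul)
  next
    case False
    have a: "fa_over {1..k} (fa_mul (cc k r S j) (fa_word [mS S]))"
      unfolding mul_word_right using Suc mS_low[OF Suc.prems False] by (intro over_shR) auto
    have b: "fa_over {1..k} (cc k r (insert (mS S) S) j)"
      using Suc.IH mS_low(3)[OF Suc.prems False] by blast
    note e = cc_low[OF False, of r j]
    show ?thesis unfolding e by (intro over_add over_smul a b)
  qed
qed

lemma smul_smul_one: "fa_smul a (fa_smul b (fa_word [])) = fa_smul (a * b) (fa_word [] :: (nat,int) fa)"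
  by (simp add: smul_smul)

lemma cc_deg:
  assumes "S \<subseteq> {1..k}"
  shows "(\<forall>j. int r - int k + int (card S) < int j \<longrightarrow> cc k r S j = 0) \<and>
         (0 \<le> int r - int k + int (card S) \<longrightarrow>
            (\<exists>s. s * s = 1 \<and> cc k r S (nat (int r - int k + int (card S))) = fa_smul s (fa_word [])))"
  using assms
proof (induction r arbitrary: S)
  case 0
  have fin: "finite S" using 0 finite_subset by blast
  have ck: "card S \<le> k" using card_mono[OF _ 0] by simp
  have eqk: "card S = k \<Longrightarrow> S = {1..k}" using card_subset_eq[OF _ 0] by simp
  show ?case
  proof (intro conjI allI impI)
    fix j assume "int 0 - int k + int (card S) < int j"
    then show "cc k 0 S j = 0" using ck by (auto simp: cc_0)
  next
    assume "0 \<le> int 0 - int k + int (card S)"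
    then have "card S = k" using ck by simp
    then show "\<exists>s. s * s = 1 \<and> cc k 0 S (nat (int 0 - int k + int (card S))) = fa_smul s (fa_word [])"
      using eqk by (intro exI[of _ 1]) (simp add: cc_0)
  qed
next
  case (Suc r)
  have IHg: "(\<forall>j. int r - int k + int (card T) < int j \<longrightarrow> cc k r T j = 0) \<and>
         (0 \<le> int r - int k + int (card T) \<longrightarrow>
            (\<exists>s. s * s = 1 \<and> cc k r T (nat (int r - int k + int (card T))) = fa_smul s (fa_word [])))"
    if "T \<subseteq> {1..k}" for T by (rule Suc.IH[OF that])
  show ?case
  proof (cases "mS S = Suc k")
    case True
    then have S: "S = {1..k}" using mS_all[OF Suc.prems] by simp
    have cS: "card S = k" using S by simp
    have IH: "(\<forall>j. int r < int j \<longrightarrow> cc k r S j = 0) \<and> (\<exists>s. s * s = 1 \<and> cc k r S r = fa_smul s (fa_word []))"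
      using IHg[OF Suc.prems] cS by simp
    show ?thesis
    proof (intro conjI allI impI)
      fix j assume "int (Suc r) - int k + int (card S) < int j"
      then have "int r < int (j - 1)" "j \<noteq> 0" using cS by auto
      note e = cc_all[OF True, of r j]
      have "cc k r S (j - 1) = 0" using IH \<open>int r < int (j - 1)\<close> by blast
      then show "cc k (Suc r) S j = 0" unfolding e using \<open>j \<noteq> 0\<close> by simp
    next
      obtain s where s: "s * s = 1" "cc k r S r = fa_smul s (fa_word [])" using IH by blast
      have "cc k (Suc r) S (Suc r) = fa_smul ((-1)^k * s) (fa_word [])"
        unfolding cc_all[OF True] using s(2) by (simp add: smul_smul)
      moreover have "nat (int (Suc r) - int k + int (card S)) = Suc r" using cS by simp
      moreover have "((-1)^k * s) * ((-1)^k * s) = (1::int)"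
        using s(1) by (simp add: algebra_simps flip: power_add mult_2) 
      ultimately show "\<exists>s. s * s = 1 \<and> cc k (Suc r) S (nat (int (Suc r) - int k + int (card S))) = fa_smul s (fa_word [])"
        by (intro exI[of _ "(-1)^k * s"]) simp
    qed
  next
    case False
    define m where "m = mS S"
    have lo: "1 \<le> m" "m \<le> k" "insert m S \<subseteq> {1..k}" "card (insert m S) = Suc (card S)"
      using mS_low[OF Suc.prems False] unfolding m_def by auto
    have IH1: "(\<forall>j. int r - int k + int (card S) < int j \<longrightarrow> cc k r S j = 0)"
      using IHg[OF Suc.prems] by simp
    have IH2: "(\<forall>j. int r - int k + int (Suc (card S)) < int j \<longrightarrow> cc k r (insert m S) j = 0) \<and>
         (0 \<le> int r - int k + int (Suc (card S)) \<longrightarrow>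
            (\<exists>s. s * s = 1 \<and> cc k r (insert m S) (nat (int r - int k + int (Suc (card S)))) = fa_smul s (fa_word [])))"
      using IHg[OF lo(3)] lo(4) by simp
    have rec: "cc k (Suc r) S j = fa_smul ((-1)^(card S + j)) (fa_mul (cc k r S j) (fa_word [m]))
        + fa_smul ((-1)^(m - 1)) (cc k r (insert m S) j)" for j
      unfolding m_def by (rule cc_low[OF False])
    show ?thesis
    proof (intro conjI allI impI)
      fix j assume j: "int (Suc r) - int k + int (card S) < int j"
      then have "cc k r S j = 0" "cc k r (insert m S) j = 0" using IH1 IH2 by auto
      then show "cc k (Suc r) S j = 0" unfolding rec by simp
    next
      assume nn: "0 \<le> int (Suc r) - int k + int (card S)"
      define D where "D = nat (int (Suc r) - int k + int (card S))"
      have D: "int D = int (Suc r) - int k + int (card S)" using nn by (simp add: D_def)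
      have z: "cc k r S D = 0" using IH1 D by auto
      obtain s where s: "s * s = 1" "cc k r (insert m S) D = fa_smul s (fa_word [])"
      proof -
        have e1: "int r - int k + int (Suc (card S)) = int D" using D by simp
        have "0 \<le> int r - int k + int (Suc (card S))" using e1 by simp
        then have "\<exists>s. s * s = 1 \<and> cc k r (insert m S) (nat (int D)) = fa_smul s (fa_word [])"
          using IH2 unfolding e1 by blast
        then show ?thesis using that by auto
      qed
      have "cc k (Suc r) S D = fa_smul ((-1)^(m-1) * s) (fa_word [])"
        unfolding rec z s(2) by (simp add: smul_smul)
      moreover have "((-1)^(m-1) * s) * ((-1)^(m-1) * s) = (1::int)"
        using s(1) by (simp add: algebra_simps flip: power_add mult_2)
      ultimately show "\<exists>s. s * s = 1 \<and> cc k (Suc r) S (nat (int (Suc r) - int k + int (card S))) = fa_smul s (fa_word [])"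
        unfolding D_def[symmetric] by blast
    qed
  qed
qed


lemma shR_Nil[simp]: "shR [] p = p"
  by (simp add: shR_def)

lemma fa_pow_word: "fa_pow (fa_word [a]) j = (fa_word (replicate j a) :: ('a,'r::comm_semiring_1) fa)"
proof (induction j)
  case 0
  then show ?case by (simp add: fa_pow_def fa_one_def)
next
  case (Suc j)
  have "fa_pow (fa_word [a]) (Suc j) = fa_mul (fa_word [a]) (fa_pow (fa_word [a]) j :: ('a,'r) fa)"
    by (simp add: fa_pow_def)
  also have "\<dots> = fa_mul (fa_word [a]) (fa_word (replicate j a))" by (metis Suc.IH)
  also have "\<dots> = fa_word (replicate (Suc j) a)" unfolding word_mul_word by simp
  finally show ?case .
qed

definition PP :: "nat \<Rightarrow> nat \<Rightarrow> nat set \<Rightarrow> (onh_gen,'k::field) fa" where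
  "PP k r S = (\<Sum>j\<le>r. shR (replicate j (X (Suc k))) (subst_x (cc k r S j)))"

lemma subst_G: "subst_x (\<Sum>j\<in>A. fa_mul (cc k r S j) (fa_pow (fa_word [Suc k]) j)) =
   (\<Sum>j\<in>A. shR (replicate j (X (Suc k))) (subst_x (cc k r S j)) :: (onh_gen,'k::field) fa)"
  by (simp add: subst_sum fa_pow_word mul_word_right subst_shR)

lemma cc_fin: "S \<subseteq> {1..k} \<Longrightarrow> finite (supp (cc k r S j))"
  using cc_over over_fin by blast

lemma PP_fin: "S \<subseteq> {1..k} \<Longrightarrow> finite (supp (PP k r S :: (onh_gen,'k::field) fa))"
  unfolding PP_def by (intro fin_sum fin_shR fin_subst cc_fin)

lemma step_L1:
  assumes "k < n" "S \<subseteq> {1..k}" "finite (supp P)"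
  shows "cg (onh_rels n l) (shR (tw k S @ [X 1]) P :: (onh_gen,'k::field) fa)
     (fa_smul ((-1)^card S) (shR (X (mS S) # tw k S) P) +
      (\<Sum>j\<in>{1..<mS S}. fa_smul ((-1)^(j-1)) (shR (tw k (S - {j})) P)))"
proof -
  have L: "cg (onh_rels n l) (fa_word ([] @ tw k S @ X 1 # []) :: (onh_gen,'k) fa)
     (fa_smul ((-1)^card S) (fa_word ([] @ X (mS S) # tw k S @ [])) +
      (\<Sum>j\<in>{1..<mS S}. fa_smul ((-1)^(j-1)) (fa_word ([] @ tw k (S - {j}) @ []))))"
    by (rule L1[OF assms(2,1)])
  have "cg (onh_rels n l) (fa_mul P (fa_word (tw k S @ [X 1])))
     (fa_mul P (fa_smul ((-1)^card S) (fa_word (X (mS S) # tw k S)) +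
      (\<Sum>j\<in>{1..<mS S}. fa_smul ((-1)^(j-1)) (fa_word (tw k (S - {j}))))))"
    using cg_mulL[OF assms(3) L] by simp
  then show ?thesis
    by (simp add: mul_add_right mul_sum_right mul_smul_right mul_word_right)
qed

lemma mS_insert_gt:
  assumes "S \<subseteq> {1..k}" "mS S \<noteq> Suc k"
  shows "mS S < mS (insert (mS S) S)"
proof -
  have S2: "insert (mS S) S \<subseteq> {1..k}" by (rule mS_low(3)[OF assms])
  have "mS (insert (mS S) S) \<notin> insert (mS S) S" by (rule mS_props(2)[OF S2])
  moreover have "0 < mS (insert (mS S) S)" by (rule mS_props(1)[OF S2])
  moreover have "\<And>i. 0 < i \<Longrightarrow> i \<le> mS S \<Longrightarrow> i \<in> insert (mS S) S"
    using mS_props(3)[OF assms(1)] by (metis insertI1 insertI2 le_neq_implies_less)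
  ultimately show ?thesis by (meson not_le)
qed

lemma reindex:
  fixes F :: "nat set \<Rightarrow> nat \<Rightarrow> nat set \<Rightarrow> 'b::comm_monoid_add"
  shows "(\<Sum>S\<in>Pow {1..k}. \<Sum>j\<in>{1..<mS S}. F (S - {j}) j S) =
         (\<Sum>S\<in>{S\<in>Pow {1..k}. mS S \<noteq> Suc k}. F S (mS S) (insert (mS S) S))"
proof -
  have "(\<Sum>S\<in>Pow {1..k}. \<Sum>j\<in>{1..<mS S}. F (S - {j}) j S) =
        (\<Sum>(S,j)\<in>Sigma (Pow {1..k}) (\<lambda>S. {1..<mS S}). F (S - {j}) j S)"
    by (rule sum.Sigma) auto
  also have "\<dots> = (\<Sum>S\<in>{S\<in>Pow {1..k}. mS S \<noteq> Suc k}. F S (mS S) (insert (mS S) S))"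
  proof -
    have T: "mS S \<notin> S \<and> insert (mS S) S - {mS S} = S \<and> (insert (mS S) S, mS S) \<in> Sigma (Pow {1..k}) (\<lambda>S. {1..<mS S})"
      if "S \<in> {S\<in>Pow {1..k}. mS S \<noteq> Suc k}" for S
    proof -
      have S: "S \<subseteq> {1..k}" "mS S \<noteq> Suc k" using that by auto
      have nin: "mS S \<notin> S" by (rule mS_props(2)[OF S(1)])
      show ?thesis using nin mS_low[OF S] mS_insert_gt[OF S] by auto
    qed
    have Sg: "j \<in> S \<and> mS S \<le> Suc k \<and> mS (S - {j}) = j \<and> insert j (S - {j}) = S \<and> S - {j} \<in> {S\<in>Pow {1..k}. mS S \<noteq> Suc k}"
      if "(S, j) \<in> Sigma (Pow {1..k}) (\<lambda>S. {1..<mS S})" for S j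
    proof -
      have S: "S \<subseteq> {1..k}" and j: "1 \<le> j" "j < mS S" using that by auto
      have jS: "j \<in> S" using mS_props(3)[OF S] j by auto
      have mj: "mS (S - {j}) = j"
      proof (rule mS_eqI)
        fix i assume "0 < i" "i < j" then show "i \<in> S - {j}" using mS_props(3)[OF S] j by auto
      qed (use j in auto)
      have jk: "j \<noteq> Suc k" using j mS_props(4)[OF S] by auto
      show ?thesis using mj jS jk S mS_props(4)[OF S] by (auto simp: insert_absorb)
    qed
    show ?thesis
    proof (rule sum.reindex_bij_witness[where i = "\<lambda>S. (insert (mS S) S, mS S)" and j = "\<lambda>(S,j). S - {j}"])
      fix a assume a: "a \<in> Sigma (Pow {1..k}) (\<lambda>S. {1..<mS S})"
      obtain S j where aj: "a = (S, j)" by (cases a)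
      have f: "j \<in> S \<and> mS S \<le> Suc k \<and> mS (S - {j}) = j \<and> insert j (S - {j}) = S \<and> S - {j} \<in> {S\<in>Pow {1..k}. mS S \<noteq> Suc k}"
        using Sg[of S j] a aj by blast
      show "(\<lambda>S. (insert (mS S) S, mS S)) ((\<lambda>(S, j). S - {j}) a) = a"
        unfolding aj using f by simp
      show "(\<lambda>(S, j). S - {j}) a \<in> {S\<in>Pow {1..k}. mS S \<noteq> Suc k}"
        unfolding aj using f by simp
      show "F ((\<lambda>(S, j). S - {j}) a) (mS ((\<lambda>(S, j). S - {j}) a))
             (insert (mS ((\<lambda>(S, j). S - {j}) a)) ((\<lambda>(S, j). S - {j}) a)) =
            (case a of (S, j) \<Rightarrow> F (S - {j}) j S)"
        unfolding aj using f by simp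
    next
      fix b assume b: "b \<in> {S\<in>Pow {1..k}. mS S \<noteq> Suc k}"
      have f: "mS b \<notin> b \<and> insert (mS b) b - {mS b} = b \<and> (insert (mS b) b, mS b) \<in> Sigma (Pow {1..k}) (\<lambda>S. {1..<mS S})"
        using T[OF b] .
      show "(\<lambda>(S, j). S - {j}) ((\<lambda>S. (insert (mS S) S, mS S)) b) = b" using f by simp
      show "(\<lambda>S. (insert (mS S) S, mS S)) b \<in> Sigma (Pow {1..k}) (\<lambda>S. {1..<mS S})" using f by simp
    qed
  qed
  finally show ?thesis .
qed


lemma cc_zero_above: assumes "S \<subseteq> {1..k}" "r < j" shows "cc k r S j = 0"
proof -
  have "card S \<le> k" using card_mono[OF _ assms(1)] by simp
  then have "int r - int k + int (card S) < int j" using assms(2) by simp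
  then show ?thesis using cc_deg[OF assms(1)] by blast
qed

lemma of_int_sign: "(of_int ((-1)^i) :: 'k::ring_1) = (-1)^i"
  by simp

lemma PP_all:
  assumes S: "S = {1..k}"
  shows "shR (tw k S) (PP k (Suc r) S) = fa_smul ((-1)^card S) (shR (X (Suc k) # tw k S) (PP k r S) :: (onh_gen,'k::field) fa)"
proof -
  have m: "mS S = Suc k" using mS_all[of S k] S by simp
  have cS: "card S = k" using S by simp
  have e: "PP k (Suc r) S = (\<Sum>j\<le>r. fa_smul ((-1)^k) (shR (replicate (Suc j) (X (Suc k))) (subst_x (cc k r S j))) :: (onh_gen,'k) fa)"
    unfolding PP_def sum.atMost_Suc_shift cc_all[OF m]
    by (simp add: subst_smul shR_smul)
  show ?thesis unfolding e cS
    by (simp add: PP_def shR_sum shR_smul shR_shR smul_sum replicate_app_Cons_same)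
qed

lemma PP_low:
  assumes S: "S \<subseteq> {1..k}" and m: "mS S \<noteq> Suc k" and kn: "k < n"
  shows "cg (onh_rels n l) (shR (tw k S) (PP k (Suc r) S) :: (onh_gen,'k::field) fa)
     (fa_smul ((-1)^card S) (shR (X (mS S) # tw k S) (PP k r S)) +
      fa_smul ((-1)^(mS S - 1)) (shR (tw k S) (PP k r (insert (mS S) S))))"
proof -
  define m where "m = mS S"
  define S2 where "S2 = insert m S"
  have S2: "S2 \<subseteq> {1..k}" unfolding S2_def m_def by (rule mS_low(3)[OF S m])
  have m1: "1 \<le> m" "m \<le> k" unfolding m_def using mS_low[OF S m] by auto
  let ?X = "X (Suc k)"
  let ?c = "\<lambda>j. subst_x (cc k r S j) :: (onh_gen,'k) fa"
  let ?d = "\<lambda>j. subst_x (cc k r S2 j) :: (onh_gen,'k) fa"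
  have z: "cc k (Suc r) S (Suc r) = 0"
    unfolding cc_low[OF m] using cc_zero_above[OF S, of r "Suc r"] cc_zero_above[OF mS_low(3)[OF S m], of r "Suc r"]
    by simp
  have trm: "shR (replicate j ?X) (subst_x (cc k (Suc r) S j)) =
      fa_smul ((-1)^(card S + j)) (shR (X m # replicate j ?X) (?c j)) + fa_smul ((-1)^(m - 1)) (shR (replicate j ?X) (?d j))" for j
    unfolding cc_low[OF m] m_def[symmetric] S2_def[symmetric]
    by (simp add: subst_add subst_smul mul_word_right subst_shR shR_add shR_smul shR_shR)
  have e: "PP k (Suc r) S = (\<Sum>j\<le>r. fa_smul ((-1)^(card S + j)) (shR (X m # replicate j ?X) (?c j)) + fa_smul ((-1)^(m - 1)) (shR (replicate j ?X) (?d j)))"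
    unfolding PP_def sum.atMost_Suc z using trm by simp
  have lhs: "shR (tw k S) (PP k (Suc r) S) = (\<Sum>j\<le>r. fa_smul ((-1)^(card S + j)) (shR (X m # replicate j ?X @ tw k S) (?c j)) + fa_smul ((-1)^(m - 1)) (shR (replicate j ?X @ tw k S) (?d j)))"
    unfolding e by (simp add: shR_sum shR_add shR_smul shR_shR)
  have rhs: "fa_smul ((-1)^card S) (shR (X m # tw k S) (PP k r S :: (onh_gen,'k) fa)) + fa_smul ((-1)^(m - 1)) (shR (tw k S) (PP k r S2)) =
     (\<Sum>j\<le>r. fa_smul ((-1)^card S) (shR (replicate j ?X @ X m # tw k S) (?c j)) + fa_smul ((-1)^(m - 1)) (shR (replicate j ?X @ tw k S) (?d j)))"
    by (simp add: PP_def shR_sum shR_smul shR_shR smul_sum sum.distrib)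
  have swp: "cg (onh_rels n l) (fa_smul ((-1)^card S) (shR (replicate j ?X @ X m # tw k S) (?c j)))
                 (fa_smul ((-1)^(card S + j)) (shR (X m # replicate j ?X @ tw k S) (?c j)))" for j
  proof -
    have fin: "finite (supp (?c j))" by (intro fin_subst cc_fin S)
    have sw: "cg (onh_rels n l) (fa_word ([] @ replicate j ?X @ X m # tw k S) :: (onh_gen,'k) fa)
           (fa_smul ((-1)^j) (fa_word ([] @ X m # replicate j ?X @ tw k S)))"
      by (rule swap_rep) (use m1 kn in auto)
    have "cg (onh_rels n l) (fa_mul (?c j) (fa_word (replicate j ?X @ X m # tw k S)))
          (fa_mul (?c j) (fa_smul ((-1)^j) (fa_word (X m # replicate j ?X @ tw k S))))"
      using cg_mulL[OF fin sw] by simp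
    then have "cg (onh_rels n l) (shR (replicate j ?X @ X m # tw k S) (?c j))
          (fa_smul ((-1)^j) (shR (X m # replicate j ?X @ tw k S) (?c j)))"
      by (simp add: mul_word_right mul_smul_right)
    from cg_smul[OF this, of "(-1)^card S"] show ?thesis
      by (simp add: smul_smul power_add)
  qed
  have "cg (onh_rels n l) (shR (tw k S) (PP k (Suc r) S) :: (onh_gen,'k) fa)
     (fa_smul ((-1)^card S) (shR (X m # tw k S) (PP k r S)) + fa_smul ((-1)^(m - 1)) (shR (tw k S) (PP k r S2)))"
    unfolding lhs rhs
    apply (rule cg_sum)
    apply (rule cg_add)
    apply (rule cg_sym)
    apply (rule swp)
    apply (rule cg_refl)
    done
  then show ?thesis unfolding m_def S2_def .
qed


lemma main:
  assumes kn: "k < n"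
  shows "cg (onh_rels n l) (fa_word (tw k {1..k} @ replicate r (X 1)) :: (onh_gen,'k::field) fa)
          (\<Sum>S\<in>Pow {1..k}. shR (tw k S) (PP k r S))"
proof (induction r)
  case 0
  have t: "shR (tw k S) (PP k 0 S :: (onh_gen,'k) fa) = (if S = {1..k} then fa_word (tw k {1..k}) else 0)" for S
    by (simp add: PP_def cc_0 subst_word shR_word)
  have "(\<Sum>S\<in>Pow {1..k}. shR (tw k S) (PP k 0 S :: (onh_gen,'k) fa)) = fa_word (tw k {1..k})"
    unfolding t by (simp add: sum.delta')
  then show ?case by (intro cg_eq) simp
next
  case (Suc r)
  let ?R = "onh_rels n l :: (onh_gen,'k) fa set"
  let ?A = "\<lambda>S. fa_smul ((-1)^card S) (shR (X (mS S) # tw k S) (PP k r S)) :: (onh_gen,'k) fa"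
  let ?B = "\<lambda>S. (\<Sum>j\<in>{1..<mS S}. fa_smul ((-1)^(j-1)) (shR (tw k (S - {j})) (PP k r S))) :: (onh_gen,'k) fa"
  let ?C = "\<lambda>S. fa_smul ((-1)^(mS S - 1)) (shR (tw k S) (PP k r (insert (mS S) S))) :: (onh_gen,'k) fa"
  have IH: "cg ?R (fa_word (tw k {1..k} @ replicate r (X 1)))
          (\<Sum>S\<in>Pow {1..k}. shR (tw k S) (PP k r S))" by (rule Suc.IH)
  have a: "fa_word (tw k {1..k} @ replicate (Suc r) (X 1)) = (shR [X 1] (fa_word (tw k {1..k} @ replicate r (X 1))) :: (onh_gen,'k) fa)"
    by (simp add: shR_word replicate_app_Cons_same)
  have c: "shR [X 1] (\<Sum>S\<in>Pow {1..k}. shR (tw k S) (PP k r S)) = (\<Sum>S\<in>Pow {1..k}. shR (tw k S @ [X 1]) (PP k r S) :: (onh_gen,'k) fa)"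
    by (simp add: shR_sum shR_shR)
  have d: "cg ?R (\<Sum>S\<in>Pow {1..k}. shR (tw k S @ [X 1]) (PP k r S)) (\<Sum>S\<in>Pow {1..k}. ?A S + ?B S)"
    by (rule cg_sum) (rule step_L1[OF kn], auto intro!: PP_fin)
  have e: "(\<Sum>S\<in>Pow {1..k}. ?B S) = (\<Sum>S\<in>{S\<in>Pow {1..k}. mS S \<noteq> Suc k}. ?C S)"
    using reindex[where F = "\<lambda>S' j S. fa_smul ((-1)^(j-1)) (shR (tw k S') (PP k r S)) :: (onh_gen,'k) fa" and k = k] .
  have f: "(\<Sum>S\<in>{S\<in>Pow {1..k}. mS S \<noteq> Suc k}. ?C S) = (\<Sum>S\<in>Pow {1..k}. if mS S \<noteq> Suc k then ?C S else 0)"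
    by (rule sum.inter_filter) simp
  have sAB: "(\<Sum>S\<in>Pow {1..k}. ?A S + ?B S) = (\<Sum>S\<in>Pow {1..k}. ?A S + (if mS S \<noteq> Suc k then ?C S else 0))"
    unfolding sum.distrib e f ..
  have g: "cg ?R (\<Sum>S\<in>Pow {1..k}. shR (tw k S) (PP k (Suc r) S)) (\<Sum>S\<in>Pow {1..k}. ?A S + (if mS S \<noteq> Suc k then ?C S else 0))"
  proof (rule cg_sum)
    fix S assume "S \<in> Pow {1..k}"
    then have S: "S \<subseteq> {1..k}" by simp
    show "cg ?R (shR (tw k S) (PP k (Suc r) S)) (?A S + (if mS S \<noteq> Suc k then ?C S else 0))"
    proof (cases "mS S = Suc k")
      case True
      then have "S = {1..k}" using mS_all[OF S] by simp
      from PP_all[OF this, of r] show ?thesis using True by (intro cg_eq) simp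
    next
      case False
      show ?thesis using PP_low[OF S False kn, of l r] False by simp
    qed
  qed
  have "cg ?R (fa_word (tw k {1..k} @ replicate (Suc r) (X 1))) (\<Sum>S\<in>Pow {1..k}. ?A S + ?B S)"
    unfolding a using cg_trans[OF cg_trans[OF cg_shR[OF IH] cg_eq[OF c]] d] .
  then have "cg ?R (fa_word (tw k {1..k} @ replicate (Suc r) (X 1))) (\<Sum>S\<in>Pow {1..k}. ?A S + (if mS S \<noteq> Suc k then ?C S else 0))"
    unfolding sAB .
  then show ?case using cg_sym[OF g] by (rule cg_trans)
qed


definition Sof :: "nat \<Rightarrow> bool list \<Rightarrow> nat set" where
  "Sof k e = {i \<in> {1..k}. e ! (k - i)}"

lemma tw_concat: "tw k S = concat (map (\<lambda>p. if k - p \<in> S then [Tau (k - p)] else []) [0..<k])"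
proof (induction k)
  case 0
  show ?case by simp
next
  case (Suc k)
  have u: "[0..<Suc k] = 0 # map Suc [0..<k]" by (simp add: upt_conv_Cons map_Suc_upt)
  have "tw (Suc k) S = (if Suc k \<in> S then [Tau (Suc k)] else []) @ tw k S" by simp
  also have "\<dots> = (if Suc k \<in> S then [Tau (Suc k)] else []) @ concat (map (\<lambda>p. if k - p \<in> S then [Tau (k - p)] else []) [0..<k])"
    using Suc.IH by simp
  also have "\<dots> = concat (map (\<lambda>p. if Suc k - p \<in> S then [Tau (Suc k - p)] else []) [0..<Suc k])"
    unfolding u by (simp add: comp_def del: diff_Suc_Suc) (simp only: diff_Suc_Suc)
  finally show ?case .
qed

lemma Sof_sub: "Sof k e \<subseteq> {1..k}" by (auto simp: Sof_def)

lemma Sof_nth: "p < k \<Longrightarrow> (k - p \<in> Sof k e) = e ! p"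
  by (auto simp: Sof_def)

lemma tau_Sof: "tau_word k e = fa_word (tw k (Sof k e))"
  unfolding tau_word_def tw_concat
  by (rule arg_cong[where f = fa_word], rule arg_cong[where f = concat], rule map_cong) (auto simp: Sof_nth)

lemma len_Sof: assumes "length e = k" shows "len_e e = card (Sof k e)"
proof -
  have "len_e e = card {i. i < length e \<and> id (e ! i)}"
    unfolding len_e_def by (rule length_filter_conv_card)
  also have "\<dots> = card ((\<lambda>i. k - i) ` {i. i < k \<and> e ! i})"
    using assms by (subst card_image) (auto simp: inj_on_def)
  also have "(\<lambda>i. k - i) ` {i. i < k \<and> e ! i} = Sof k e"
  proof
    show "(\<lambda>i. k - i) ` {i. i < k \<and> e ! i} \<subseteq> Sof k e" by (auto simp: Sof_def)
    show "Sof k e \<subseteq> (\<lambda>i. k - i) ` {i. i < k \<and> e ! i}"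
    proof
      fix x assume "x \<in> Sof k e"
      then have x: "1 \<le> x" "x \<le> k" "e ! (k - x)" by (auto simp: Sof_def)
      then show "x \<in> (\<lambda>i. k - i) ` {i. i < k \<and> e ! i}"
        by (intro image_eqI[of _ _ "k - x"]) auto
    qed
  qed
  finally show ?thesis .
qed

lemma Sof_bij: "bij_betw (Sof k) {e. length e = k} (Pow {1..k})"
proof (rule bij_betw_byWitness[where f' = "\<lambda>S. map (\<lambda>p. k - p \<in> S) [0..<k]"])
  show "\<forall>e\<in>{e. length e = k}. map (\<lambda>p. k - p \<in> Sof k e) [0..<k] = e"
    by (auto intro!: nth_equalityI simp: Sof_nth)
  show "\<forall>S\<in>Pow {1..k}. Sof k (map (\<lambda>p. k - p \<in> S) [0..<k]) = S"
  proof
    fix S assume "S \<in> Pow {1..k}"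
    then show "Sof k (map (\<lambda>p. k - p \<in> S) [0..<k]) = S"
      by (auto simp: Sof_def)
  qed
  show "Sof k ` {e. length e = k} \<subseteq> Pow {1..k}" using Sof_sub by auto
  show "(\<lambda>S. map (\<lambda>p. k - p \<in> S) [0..<k]) ` Pow {1..k} \<subseteq> {e. length e = k}" by auto
qed

theorem lemma4p8:
  fixes l n k :: nat
  assumes "n \<le> l" and "1 \<le> k" and "k < n" and "(2::'k::field) \<noteq> 0"
  shows "\<exists>g :: bool list \<Rightarrow> (nat, int) fa.
    (\<forall>e. length e = k \<longrightarrow>
       skpol (k + 1) (g e) \<and>
       (let D = l - k + len_e e in
        \<exists>c :: nat \<Rightarrow> (nat, int) fa.
          (\<forall>j. skpol k (c j)) \<and>
          skpol_eq (g e) (fa_sum {..D} (\<lambda>j. fa_mul (c j) (fa_pow (fa_word [k + 1]) j))) \<and>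
          (\<exists>d. skpol k d \<and> skpol_eq (fa_mul (c D) d) fa_one \<and> skpol_eq (fa_mul d (c D)) fa_one))) \<and>
    onhl_zero n l
      (fa_sum {e. length e = k} (\<lambda>e. fa_mul (subst_x (g e)) (tau_word k e))
        :: (onh_gen, 'k) fa)"
proof -
  have kn: "k < n" and kl: "k \<le> l" using assms by auto
  define g where "g = (\<lambda>e. fa_sum {..l - k + len_e e} (\<lambda>j. fa_mul (cc k l (Sof k e) j) (fa_pow (fa_word [k + 1]) j)))"
  have eqrefl: "skpol_eq p p" for p
    unfolding skpol_eq_def fa_diff_eq by (simp add: I_zero)
  have part1: "skpol (k + 1) (g e) \<and>
       (let D = l - k + len_e e in
        \<exists>c :: nat \<Rightarrow> (nat, int) fa.
          (\<forall>j. skpol k (c j)) \<and>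
          skpol_eq (g e) (fa_sum {..D} (\<lambda>j. fa_mul (c j) (fa_pow (fa_word [k + 1]) j))) \<and>
          (\<exists>d. skpol k d \<and> skpol_eq (fa_mul (c D) d) fa_one \<and> skpol_eq (fa_mul d (c D)) fa_one))"
    if e: "length e = k" for e
  proof -
    define S where "S = Sof k e"
    have S: "S \<subseteq> {1..k}" unfolding S_def by (rule Sof_sub)
    have cS: "len_e e = card S" unfolding S_def by (rule len_Sof[OF e])
    have ck: "card S \<le> k" using card_mono[OF _ S] by simp
    have sk: "skpol (k + 1) (g e)"
      unfolding skpol_def g_def fa_sum_eq S_def[symmetric]
    proof (rule over_sum)
      fix j
      show "fa_over {1..k + 1} (fa_mul (cc k l S j) (fa_pow (fa_word [k + 1]) j))"
        unfolding fa_pow_word mul_word_right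
        by (rule over_shR) (auto intro: over_mono[OF cc_over[OF S]])
    qed
    obtain s where s: "s * s = 1" "cc k l S (nat (int l - int k + int (card S))) = fa_smul s (fa_word [])"
      using cc_deg[OF S, of l] kl by auto
    have nD: "nat (int l - int k + int (card S)) = l - k + len_e e" using kl cS by simp
    have lead: "cc k l S (l - k + len_e e) = fa_smul s (fa_word [])" using s(2) unfolding nD .
    have one: "fa_mul (fa_smul s (fa_word [])) (fa_smul s (fa_word [])) = (fa_one :: (nat,int) fa)"
      by (simp add: mul_smul_left mul_smul_right smul_smul s(1) word_mul_word fa_one_def)
    have ex: "\<exists>c :: nat \<Rightarrow> (nat, int) fa.
          (\<forall>j. skpol k (c j)) \<and>
          skpol_eq (g e) (fa_sum {..l - k + len_e e} (\<lambda>j. fa_mul (c j) (fa_pow (fa_word [k + 1]) j))) \<and>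
          (\<exists>d. skpol k d \<and> skpol_eq (fa_mul (c (l - k + len_e e)) d) fa_one \<and> skpol_eq (fa_mul d (c (l - k + len_e e))) fa_one)"
    proof (intro exI[of _ "cc k l S"] exI[of _ "fa_smul s (fa_word [])"] conjI allI)
      fix j show "skpol k (cc k l S j)" unfolding skpol_def by (rule cc_over[OF S])
    next
      show "skpol_eq (g e) (fa_sum {..l - k + len_e e} (\<lambda>j. fa_mul (cc k l S j) (fa_pow (fa_word [k + 1]) j)))"
        unfolding g_def S_def by (rule eqrefl)
    next
      show "skpol k (fa_smul s (fa_word []))" unfolding skpol_def by (intro over_smul over_word) simp
    next
      show "skpol_eq (fa_mul (cc k l S (l - k + len_e e)) (fa_smul s (fa_word []))) fa_one"
        unfolding lead one by (rule eqrefl)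
    next
      show "skpol_eq (fa_mul (fa_smul s (fa_word [])) (cc k l S (l - k + len_e e))) fa_one"
        unfolding lead one by (rule eqrefl)
    qed
    show ?thesis using sk ex unfolding Let_def by blast
  qed
  have term_eq: "fa_mul (subst_x (g e)) (tau_word k e) = (shR (tw k (Sof k e)) (PP k l (Sof k e)) :: (onh_gen,'k) fa)"
    if e: "length e = k" for e
  proof -
    define S where "S = Sof k e"
    have S: "S \<subseteq> {1..k}" unfolding S_def by (rule Sof_sub)
    have cS: "len_e e = card S" unfolding S_def by (rule len_Sof[OF e])
    have ck: "card S \<le> k" using card_mono[OF _ S] by simp
    have "subst_x (g e) = (\<Sum>j\<in>{..l - k + len_e e}. shR (replicate j (X (Suc k))) (subst_x (cc k l S j)) :: (onh_gen,'k) fa)"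
      unfolding g_def fa_sum_eq S_def by (simp add: subst_G)
    also have "\<dots> = PP k l S"
      unfolding PP_def
    proof (rule sum.mono_neutral_left)
      show "{..l - k + len_e e} \<subseteq> {..l}" using ck cS kl by auto
      show "\<forall>j\<in>{..l} - {..l - k + len_e e}. shR (replicate j (X (Suc k))) (subst_x (cc k l S j)) = (0 :: (onh_gen,'k) fa)"
      proof
        fix j assume "j \<in> {..l} - {..l - k + len_e e}"
        then have "int l - int k + int (card S) < int j" using cS kl by auto
        then have "cc k l S j = 0" using cc_deg[OF S, of l] by blast
        then show "shR (replicate j (X (Suc k))) (subst_x (cc k l S j)) = (0 :: (onh_gen,'k) fa)" by simp
      qed
    qed simp
    finally show ?thesis unfolding tau_Sof S_def[symmetric] by (simp add: mul_word_right)
  qed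
  have sumeq: "fa_sum {e. length e = k} (\<lambda>e. fa_mul (subst_x (g e)) (tau_word k e)) =
      (\<Sum>S\<in>Pow {1..k}. shR (tw k S) (PP k l S) :: (onh_gen,'k) fa)"
  proof -
    have "fa_sum {e. length e = k} (\<lambda>e. fa_mul (subst_x (g e)) (tau_word k e)) =
        (\<Sum>e\<in>{e. length e = k}. shR (tw k (Sof k e)) (PP k l (Sof k e)) :: (onh_gen,'k) fa)"
      unfolding fa_sum_eq by (rule sum.cong) (simp_all add: term_eq)
    also have "\<dots> = (\<Sum>S\<in>Pow {1..k}. shR (tw k S) (PP k l S))"
      by (rule sum.reindex_bij_betw[OF Sof_bij])
    finally show ?thesis .
  qed
  have w0: "cg (onh_rels n l) (fa_word (tw k {1..k} @ replicate l (X 1)) :: (onh_gen,'k) fa) 0"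
  proof -
    have "cg (onh_rels n l) (shR [] (shL (tw k {1..k}) (fa_word (replicate l (X 1)))) :: (onh_gen,'k) fa) 0"
      by (rule cg_gen) (rule rel_cyc)
    then show ?thesis by (simp add: shL_word)
  qed
  have part2: "onhl_zero n l (fa_sum {e. length e = k} (\<lambda>e. fa_mul (subst_x (g e)) (tau_word k e)) :: (onh_gen,'k) fa)"
    unfolding onhl_zero_def sumeq
    by (rule cg_zeroI) (rule cg_trans[OF cg_sym[OF main[OF kn]] w0])
  show ?thesis using part1 part2 by (intro exI[of _ g]) blast
qed


end
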